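(* Let $G$ be a torsion-free group and let $A$ be its FC-centre. Then $A$ is a normal abelian subgroup of $G$ and $\mathcal{Z}(\mathrm{C}^*_{\mathrm{red}}(G)) \subset \mathrm{C}^*(A)$. In particular, $\mathcal{Z}(\mathrm{C}^*_{\mathrm{red}}(G)) = \mathrm{C}^*(A)^G$.
   Context: The FC-centre of $G$ is $\{g \in G \mid g \text{ has a finite conjugacy class in } G\}$. $\mathrm{C}^*_{\mathrm{red}}(G)$ is the reduced group $\mathrm{C}^*$-algebra, generated by unitaries $u_g$, $g\in G$; $\mathrm{C}^*(A)$ is identified with the $\mathrm{C}^*$-subalgebra of $\mathrm{C}^*_{\mathrm{red}}(G)$ generated by $u_a$, $a \in A$. $G$ acts on $\mathrm{C}^*(A)$ by conjugation $x \mapsto u_g x u_g^*$, and $\mathrm{C}^*(A)^G$ denotes the fixed point algebra. *)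

theory Defs
  imports "HOL-Analysis.Analysis" "HOL-Algebra.Algebra"
begin

definition torsion_free :: "('a, 'b) monoid_scheme \<Rightarrow> bool" where
  "torsion_free G \<longleftrightarrow>
     (\<forall>g\<in>carrier G. g \<noteq> \<one>\<^bsub>G\<^esub> \<longrightarrow> (\<forall>n::nat. n > 0 \<longrightarrow> g [^]\<^bsub>G\<^esub> n \<noteq> \<one>\<^bsub>G\<^esub>))"

definition FC_centre :: "('a, 'b) monoid_scheme \<Rightarrow> 'a set" where
  "FC_centre G = {g \<in> carrier G.
      finite {h \<otimes>\<^bsub>G\<^esub> g \<otimes>\<^bsub>G\<^esub> inv\<^bsub>G\<^esub> h | h. h \<in> carrier G}}"

definition l2 :: "('a, 'b) monoid_scheme \<Rightarrow> ('a \<Rightarrow> complex) set" where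
  "l2 G = {\<xi>. (\<forall>x. x \<notin> carrier G \<longrightarrow> \<xi> x = 0) \<and>
               (\<lambda>x. (cmod (\<xi> x))\<^sup>2) summable_on carrier G}"

definition l2norm :: "('a, 'b) monoid_scheme \<Rightarrow> ('a \<Rightarrow> complex) \<Rightarrow> real" where
  "l2norm G \<xi> = sqrt (infsum (\<lambda>x. (cmod (\<xi> x))\<^sup>2) (carrier G))"

text \<open>Finitely supported functions on G (elements of the group algebra C[G]).\<close>

definition finsupp :: "('a, 'b) monoid_scheme \<Rightarrow> ('a \<Rightarrow> complex) \<Rightarrow> bool" where
  "finsupp G p \<longleftrightarrow> finite {x. p x \<noteq> 0} \<and> {x. p x \<noteq> 0} \<subseteq> carrier G"

text \<open>Left regular representation of an element p of C[G] on l2(G):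
  (lambda(p) xi)(x) = sum_y p(y) xi(y^-1 x). Operators are modelled as functions
  on 'a => complex, normalised to be 0 outside l2(G).\<close>

definition lreg :: "('a, 'b) monoid_scheme \<Rightarrow> ('a \<Rightarrow> complex) \<Rightarrow> ('a \<Rightarrow> complex) \<Rightarrow> ('a \<Rightarrow> complex)" where
  "lreg G p \<xi> =
     (if \<xi> \<in> l2 G then
        (\<lambda>x. if x \<in> carrier G
              then (\<Sum>y\<in>{y. p y \<noteq> 0}. p y * \<xi> (inv\<^bsub>G\<^esub> y \<otimes>\<^bsub>G\<^esub> x)) else 0)
      else (\<lambda>_. 0))"

definition ug :: "('a, 'b) monoid_scheme \<Rightarrow> 'a \<Rightarrow> ('a \<Rightarrow> complex) \<Rightarrow> ('a \<Rightarrow> complex)" where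
  "ug G g = lreg G (\<lambda>x. if x = g then 1 else 0)"

definition op_close :: "('a, 'b) monoid_scheme \<Rightarrow> (('a \<Rightarrow> complex) \<Rightarrow> ('a \<Rightarrow> complex))
    \<Rightarrow> (('a \<Rightarrow> complex) \<Rightarrow> ('a \<Rightarrow> complex)) \<Rightarrow> real \<Rightarrow> bool" where
  "op_close G T S \<epsilon> \<longleftrightarrow>
     (\<forall>\<xi>\<in>l2 G. l2norm G (\<lambda>x. T \<xi> x - S \<xi> x) \<le> \<epsilon> * l2norm G \<xi>)"

text \<open>Norm closure in B(l2(G)) of lambda(C[B]) for a subset B of G.
  For B = G this is the reduced group C*-algebra; for a subgroup A it is
  C*(A) viewed inside C*_red(G).\<close>

definition cstar_of :: "('a, 'b) monoid_scheme \<Rightarrow> 'a set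
    \<Rightarrow> (('a \<Rightarrow> complex) \<Rightarrow> ('a \<Rightarrow> complex)) set" where
  "cstar_of G B = {T. (\<forall>\<xi>\<in>l2 G. T \<xi> \<in> l2 G) \<and> (\<forall>\<xi>. \<xi> \<notin> l2 G \<longrightarrow> T \<xi> = (\<lambda>_. 0)) \<and>
      (\<forall>\<epsilon>>0. \<exists>p. finsupp G p \<and> {x. p x \<noteq> 0} \<subseteq> B \<and> op_close G T (lreg G p) \<epsilon>)}"

definition Cred :: "('a, 'b) monoid_scheme \<Rightarrow> (('a \<Rightarrow> complex) \<Rightarrow> ('a \<Rightarrow> complex)) set" where
  "Cred G = cstar_of G (carrier G)"

definition Cred_centre :: "('a, 'b) monoid_scheme \<Rightarrow> (('a \<Rightarrow> complex) \<Rightarrow> ('a \<Rightarrow> complex)) set" where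
  "Cred_centre G = {T \<in> Cred G. \<forall>S\<in>Cred G. (\<lambda>\<xi>. T (S \<xi>)) = (\<lambda>\<xi>. S (T \<xi>))}"

text \<open>Fixed points of the conjugation action x |-> u_g x u_g^* (u_g^* = u_{g^-1}).\<close>

definition fixed_points :: "('a, 'b) monoid_scheme \<Rightarrow> (('a \<Rightarrow> complex) \<Rightarrow> ('a \<Rightarrow> complex)) set
    \<Rightarrow> (('a \<Rightarrow> complex) \<Rightarrow> ('a \<Rightarrow> complex)) set" where
  "fixed_points G Xs = {T \<in> Xs. \<forall>g\<in>carrier G. (\<lambda>\<xi>. ug G g (T (ug G (inv\<^bsub>G\<^esub> g) \<xi>))) = T}"

end

theory Submission
  imports Defs
begin

lemma nn_bound_summable:
  fixes f :: "'x \<Rightarrow> real"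
  assumes "\<And>x. x \<in> A \<Longrightarrow> f x \<ge> 0"
    and "\<And>F. finite F \<Longrightarrow> F \<subseteq> A \<Longrightarrow> sum f F \<le> b"
  shows "f summable_on A" "infsum f A \<le> b"
proof -
  show s: "f summable_on A"
  proof (rule nonneg_bdd_above_summable_on)
    show "bdd_above (sum f ` {F. F \<subseteq> A \<and> finite F})"
      using assms(2) by (intro bdd_aboveI[where M=b]) auto
  qed (use assms in auto)
  show "infsum f A \<le> b" using s assms(2) by (rule infsum_le_finite_sums)
qed

lemma finite_sum_le_infsum:
  fixes f :: "'x \<Rightarrow> real"
  assumes "f summable_on A" "finite F" "F \<subseteq> A" "\<And>x. x \<in> A \<Longrightarrow> f x \<ge> 0"
  shows "sum f F \<le> infsum f A"
proof -
  have "infsum f F \<le> infsum f A"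
    using assms by (intro infsum_mono2) auto
  then show ?thesis using assms(2) by simp
qed

definition sqf :: "('x \<Rightarrow> complex) \<Rightarrow> 'x \<Rightarrow> real" where
  "sqf \<xi> = (\<lambda>x. (cmod (\<xi> x))\<^sup>2)"

lemma sqf_nonneg[simp]: "sqf \<xi> x \<ge> 0" by (simp add: sqf_def)

lemma l2_iff: "\<xi> \<in> l2 G \<longleftrightarrow> (\<forall>x. x \<notin> carrier G \<longrightarrow> \<xi> x = 0) \<and> sqf \<xi> summable_on carrier G"
  by (simp add: l2_def sqf_def)

lemma l2norm_sqf: "l2norm G \<xi> = sqrt (infsum (sqf \<xi>) (carrier G))"
  by (simp add: l2norm_def sqf_def)

lemma l2norm_nonneg[simp]: "l2norm G \<xi> \<ge> 0"
  using infsum_nonneg[of "carrier G" "sqf \<xi>"] by (simp add: l2norm_sqf)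

lemma l2norm_sq: "(l2norm G \<xi>)\<^sup>2 = infsum (sqf \<xi>) (carrier G)"
  using infsum_nonneg[of "carrier G" "sqf \<xi>"] by (simp add: l2norm_sqf)

lemma l2_outside: "\<xi> \<in> l2 G \<Longrightarrow> x \<notin> carrier G \<Longrightarrow> \<xi> x = 0"
  by (simp add: l2_def)

lemma finite_L2_le:
  assumes "\<xi> \<in> l2 G" "finite F" "F \<subseteq> carrier G"
  shows "L2_set (\<lambda>x. cmod (\<xi> x)) F \<le> l2norm G \<xi>"
proof -
  have "sum (sqf \<xi>) F \<le> infsum (sqf \<xi>) (carrier G)"
    using assms by (intro finite_sum_le_infsum) (auto simp: l2_iff)
  then show ?thesis by (simp add: L2_set_def l2norm_sqf sqf_def)
qed

lemma l2_bound:
  assumes "\<And>x. x \<notin> carrier G \<Longrightarrow> \<xi> x = 0"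
    and "\<And>F. finite F \<Longrightarrow> F \<subseteq> carrier G \<Longrightarrow> L2_set (\<lambda>x. cmod (\<xi> x)) F \<le> b"
  shows "\<xi> \<in> l2 G" "l2norm G \<xi> \<le> b"
proof -
  have b0: "b \<ge> 0" using assms(2)[of "{}"] by simp
  have *: "sum (sqf \<xi>) F \<le> b\<^sup>2" if "finite F" "F \<subseteq> carrier G" for F
  proof -
    have "sqrt (sum (sqf \<xi>) F) \<le> b" using assms(2)[OF that] by (simp add: L2_set_def sqf_def)
    moreover have "sum (sqf \<xi>) F \<ge> 0" by (simp add: sum_nonneg)
    ultimately have "(sqrt (sum (sqf \<xi>) F))\<^sup>2 \<le> b\<^sup>2"
      by (intro power_mono) auto
    then show ?thesis using \<open>sum (sqf \<xi>) F \<ge> 0\<close> by simp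
  qed
  have s: "sqf \<xi> summable_on carrier G" "infsum (sqf \<xi>) (carrier G) \<le> b\<^sup>2"
    using nn_bound_summable[of "carrier G" "sqf \<xi>" "b\<^sup>2"] * by auto
  show "\<xi> \<in> l2 G" using s assms(1) by (simp add: l2_iff)
  show "l2norm G \<xi> \<le> b" using s b0 by (simp add: l2norm_sqf real_sqrt_le_iff real_le_lsqrt)
qed

lemma l2_zero[simp]: "(\<lambda>_. 0) \<in> l2 G" "l2norm G (\<lambda>_. 0) = 0"
  by (auto simp: l2_def l2norm_def)

lemma l2_add:
  assumes "\<xi> \<in> l2 G" "\<eta> \<in> l2 G"
  shows "(\<lambda>x. \<xi> x + \<eta> x) \<in> l2 G" "l2norm G (\<lambda>x. \<xi> x + \<eta> x) \<le> l2norm G \<xi> + l2norm G \<eta>"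
proof -
  have b: "L2_set (\<lambda>x. cmod (\<xi> x + \<eta> x)) F \<le> l2norm G \<xi> + l2norm G \<eta>"
    if "finite F" "F \<subseteq> carrier G" for F
  proof -
    have "L2_set (\<lambda>x. cmod (\<xi> x + \<eta> x)) F \<le> L2_set (\<lambda>x. cmod (\<xi> x) + cmod (\<eta> x)) F"
      by (intro L2_set_mono norm_triangle_ineq) auto
    also have "\<dots> \<le> L2_set (\<lambda>x. cmod (\<xi> x)) F + L2_set (\<lambda>x. cmod (\<eta> x)) F"
      by (rule L2_set_triangle_ineq)
    also have "\<dots> \<le> l2norm G \<xi> + l2norm G \<eta>"
      using finite_L2_le[OF assms(1) that] finite_L2_le[OF assms(2) that] by simp
    finally show ?thesis .
  qed
  have o: "\<And>x. x \<notin> carrier G \<Longrightarrow> \<xi> x + \<eta> x = 0" using assms by (simp add: l2_outside)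
  show "(\<lambda>x. \<xi> x + \<eta> x) \<in> l2 G" "l2norm G (\<lambda>x. \<xi> x + \<eta> x) \<le> l2norm G \<xi> + l2norm G \<eta>"
    using l2_bound[of G "\<lambda>x. \<xi> x + \<eta> x", OF o b] by auto
qed

lemma l2_scale:
  assumes "\<xi> \<in> l2 G"
  shows "(\<lambda>x. c * \<xi> x) \<in> l2 G" "l2norm G (\<lambda>x. c * \<xi> x) = cmod c * l2norm G \<xi>"
proof -
  have eq: "sqf (\<lambda>x. c * \<xi> x) = (\<lambda>x. (cmod c)\<^sup>2 * sqf \<xi> x)"
    by (auto simp: sqf_def norm_mult power_mult_distrib)
  have s: "sqf \<xi> summable_on carrier G" using assms by (simp add: l2_iff)
  show "(\<lambda>x. c * \<xi> x) \<in> l2 G"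
    using assms unfolding l2_iff eq by (auto intro: summable_on_cmult_right s)
  show "l2norm G (\<lambda>x. c * \<xi> x) = cmod c * l2norm G \<xi>"
    unfolding l2norm_sqf eq infsum_cmult_right'
    by (simp add: real_sqrt_mult)
qed

lemma l2_neg:
  assumes "\<xi> \<in> l2 G"
  shows "(\<lambda>x. - \<xi> x) \<in> l2 G" "l2norm G (\<lambda>x. - \<xi> x) = l2norm G \<xi>"
  using l2_scale[OF assms, of "-1"] by auto

lemma l2_diff:
  assumes "\<xi> \<in> l2 G" "\<eta> \<in> l2 G"
  shows "(\<lambda>x. \<xi> x - \<eta> x) \<in> l2 G" "l2norm G (\<lambda>x. \<xi> x - \<eta> x) \<le> l2norm G \<xi> + l2norm G \<eta>"
  using l2_add[OF assms(1) l2_neg(1)[OF assms(2)]] l2_neg(2)[OF assms(2)] by auto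

lemma l2_point:
  assumes "\<xi> \<in> l2 G"
  shows "cmod (\<xi> x) \<le> l2norm G \<xi>"
proof (cases "x \<in> carrier G")
  case True
  have "L2_set (\<lambda>x. cmod (\<xi> x)) {x} \<le> l2norm G \<xi>"
    using finite_L2_le[OF assms, of "{x}"] True by simp
  then show ?thesis by simp
next
  case False then show ?thesis using assms by (simp add: l2_outside)
qed

lemma l2norm_zero_imp:
  assumes "\<xi> \<in> l2 G" "l2norm G \<xi> \<le> 0"
  shows "\<xi> = (\<lambda>_. 0)"
proof
  fix x
  have "cmod (\<xi> x) \<le> 0" using l2_point[OF assms(1), of x] assms(2) by linarith
  then show "\<xi> x = 0" by simp
qed

lemma l2norm_small_zero:
  assumes "\<xi> \<in> l2 G" "\<And>e. e > 0 \<Longrightarrow> l2norm G \<xi> \<le> e"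
  shows "\<xi> = (\<lambda>_. 0)"
proof -
  have "l2norm G \<xi> \<le> 0"
    using assms(2) by (rule field_le_epsilon) simp
  then show ?thesis using l2norm_zero_imp[OF assms(1)] by simp
qed

lemma l2_sum:
  assumes "finite S" "\<And>i. i \<in> S \<Longrightarrow> \<xi> i \<in> l2 G"
  shows "(\<lambda>x. \<Sum>i\<in>S. \<xi> i x) \<in> l2 G \<and> l2norm G (\<lambda>x. \<Sum>i\<in>S. \<xi> i x) \<le> (\<Sum>i\<in>S. l2norm G (\<xi> i))"
  using assms
proof (induction S rule: finite_induct)
  case empty
  then show ?case by simp
next
  case (insert a S)
  have h: "(\<lambda>x. \<Sum>i\<in>S. \<xi> i x) \<in> l2 G" "l2norm G (\<lambda>x. \<Sum>i\<in>S. \<xi> i x) \<le> (\<Sum>i\<in>S. l2norm G (\<xi> i))"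
    using insert.IH insert.prems by blast+
  have a: "\<xi> a \<in> l2 G" using insert.prems by blast
  have eq: "(\<lambda>x. \<Sum>i\<in>insert a S. \<xi> i x) = (\<lambda>x. \<xi> a x + (\<Sum>i\<in>S. \<xi> i x))"
    using insert.hyps by simp
  have eq2: "(\<Sum>i\<in>insert a S. l2norm G (\<xi> i)) = l2norm G (\<xi> a) + (\<Sum>i\<in>S. l2norm G (\<xi> i))"
    using insert.hyps by simp
  show ?case unfolding eq eq2
    using l2_add[OF a h(1)] h(2) by linarith
qed



context group
begin

definition lt :: "'a \<Rightarrow> ('a \<Rightarrow> complex) \<Rightarrow> ('a \<Rightarrow> complex)" where
  "lt g \<xi> = (\<lambda>x. if x \<in> carrier G then \<xi> (inv g \<otimes> x) else 0)"

definition rt :: "'a \<Rightarrow> ('a \<Rightarrow> complex) \<Rightarrow> ('a \<Rightarrow> complex)" where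
  "rt h \<xi> = (\<lambda>x. if x \<in> carrier G then \<xi> (x \<otimes> h) else 0)"

definition delta :: "'a \<Rightarrow> 'a \<Rightarrow> complex" where
  "delta h = (\<lambda>x. if x = h then 1 else 0)"

definition supp :: "('a \<Rightarrow> complex) \<Rightarrow> 'a set" where
  "supp p = {x. p x \<noteq> 0}"

definition pn :: "('a \<Rightarrow> complex) \<Rightarrow> real" where
  "pn p = (\<Sum>y\<in>supp p. cmod (p y))"

lemma pn_nonneg[simp]: "pn p \<ge> 0"
  by (simp add: pn_def sum_nonneg)

lemma bij_lmult: "g \<in> carrier G \<Longrightarrow> bij_betw (\<lambda>x. g \<otimes> x) (carrier G) (carrier G)"
  by (rule bij_betw_byWitness[where f'="\<lambda>x. inv g \<otimes> x"])
     (auto simp: m_assoc[symmetric])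

lemma bij_rmult: "h \<in> carrier G \<Longrightarrow> bij_betw (\<lambda>x. x \<otimes> h) (carrier G) (carrier G)"
  by (rule bij_betw_byWitness[where f'="\<lambda>x. x \<otimes> inv h"])
     (auto simp: m_assoc)

lemma sqf_reindex:
  assumes "bij_betw f (carrier G) (carrier G)" "\<xi> \<in> l2 G"
  shows "sqf (\<lambda>x. \<xi> (f x)) summable_on carrier G \<and>
         infsum (sqf (\<lambda>x. \<xi> (f x))) (carrier G) = infsum (sqf \<xi>) (carrier G)"
proof -
  have e: "sqf (\<lambda>x. \<xi> (f x)) = (\<lambda>x. sqf \<xi> (f x))" by (simp add: sqf_def)
  have s: "sqf \<xi> summable_on carrier G" using assms(2) by (simp add: l2_iff)
  show ?thesis unfolding e
    using summable_on_reindex_bij_betw[OF assms(1), of "sqf \<xi>"] s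
          infsum_reindex_bij_betw[OF assms(1), of "sqf \<xi>"] by simp
qed

lemma sqf_restrict:
  "sqf (\<lambda>x. if x \<in> carrier G then \<eta> x else 0) summable_on carrier G \<longleftrightarrow> sqf \<eta> summable_on carrier G"
  "infsum (sqf (\<lambda>x. if x \<in> carrier G then \<eta> x else 0)) (carrier G) = infsum (sqf \<eta>) (carrier G)"
  by (auto intro!: summable_on_cong infsum_cong simp: sqf_def)

lemma lt_l2:
  assumes "g \<in> carrier G" "\<xi> \<in> l2 G"
  shows "lt g \<xi> \<in> l2 G" "l2norm G (lt g \<xi>) = l2norm G \<xi>"
proof -
  have b: "bij_betw (\<lambda>x. inv g \<otimes> x) (carrier G) (carrier G)" using assms by (simp add: bij_lmult)
  note r = sqf_reindex[OF b assms(2)]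
  show "lt g \<xi> \<in> l2 G" using r unfolding l2_iff lt_def sqf_restrict by auto
  show "l2norm G (lt g \<xi>) = l2norm G \<xi>" using r unfolding l2norm_sqf lt_def sqf_restrict by auto
qed

lemma rt_l2:
  assumes "h \<in> carrier G" "\<xi> \<in> l2 G"
  shows "rt h \<xi> \<in> l2 G" "l2norm G (rt h \<xi>) = l2norm G \<xi>"
proof -
  have b: "bij_betw (\<lambda>x. x \<otimes> h) (carrier G) (carrier G)" using assms by (simp add: bij_rmult)
  note r = sqf_reindex[OF b assms(2)]
  show "rt h \<xi> \<in> l2 G" using r unfolding l2_iff rt_def sqf_restrict by auto
  show "l2norm G (rt h \<xi>) = l2norm G \<xi>" using r unfolding l2norm_sqf rt_def sqf_restrict by auto
qed

lemma finsupp_supp: "finsupp G p \<Longrightarrow> finite (supp p) \<and> supp p \<subseteq> carrier G"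
  by (simp add: finsupp_def supp_def)

lemma lreg_eq:
  assumes "finsupp G p" "\<xi> \<in> l2 G"
  shows "lreg G p \<xi> = (\<lambda>x. \<Sum>y\<in>supp p. p y * lt y \<xi> x)"
proof
  fix x
  show "lreg G p \<xi> x = (\<Sum>y\<in>supp p. p y * lt y \<xi> x)"
    using assms(2) by (cases "x \<in> carrier G") (simp_all add: lreg_def lt_def supp_def)
qed

lemma lreg_nonl2: "\<xi> \<notin> l2 G \<Longrightarrow> lreg G p \<xi> = (\<lambda>_. 0)"
  by (simp add: lreg_def)

lemma lreg_l2:
  assumes "finsupp G p" "\<xi> \<in> l2 G"
  shows "lreg G p \<xi> \<in> l2 G" "l2norm G (lreg G p \<xi>) \<le> pn p * l2norm G \<xi>"
proof -
  have fs: "finite (supp p)" "supp p \<subseteq> carrier G" using finsupp_supp[OF assms(1)] by auto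
  have each: "(\<lambda>x. p y * lt y \<xi> x) \<in> l2 G \<and> l2norm G (\<lambda>x. p y * lt y \<xi> x) = cmod (p y) * l2norm G \<xi>"
    if "y \<in> supp p" for y
    using l2_scale[OF lt_l2(1)[of y \<xi>], of "p y"] lt_l2(2)[of y \<xi>] that fs assms(2) by auto
  have S: "(\<lambda>x. \<Sum>y\<in>supp p. p y * lt y \<xi> x) \<in> l2 G \<and>
      l2norm G (\<lambda>x. \<Sum>y\<in>supp p. p y * lt y \<xi> x) \<le> (\<Sum>y\<in>supp p. l2norm G (\<lambda>x. p y * lt y \<xi> x))"
    using l2_sum[OF fs(1), of "\<lambda>y x. p y * lt y \<xi> x" G] each by blast
  have "(\<Sum>y\<in>supp p. l2norm G (\<lambda>x. p y * lt y \<xi> x)) = pn p * l2norm G \<xi>"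
    using each by (simp add: pn_def sum_distrib_right)
  then show "lreg G p \<xi> \<in> l2 G" "l2norm G (lreg G p \<xi>) \<le> pn p * l2norm G \<xi>"
    using S lreg_eq[OF assms] by auto
qed

lemma lt_add: "lt g (\<lambda>x. \<xi> x + \<eta> x) = (\<lambda>x. lt g \<xi> x + lt g \<eta> x)"
  by (auto simp: lt_def)

lemma lt_scale: "lt g (\<lambda>x. c * \<xi> x) = (\<lambda>x. c * lt g \<xi> x)"
  by (auto simp: lt_def)

lemma lreg_add:
  assumes "finsupp G p" "\<xi> \<in> l2 G" "\<eta> \<in> l2 G"
  shows "lreg G p (\<lambda>x. \<xi> x + \<eta> x) = (\<lambda>x. lreg G p \<xi> x + lreg G p \<eta> x)"
  using lreg_eq[OF assms(1) l2_add(1)[OF assms(2,3)]] lreg_eq[OF assms(1,2)] lreg_eq[OF assms(1,3)]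
  by (simp add: lt_add distrib_left sum.distrib)

lemma lreg_scale:
  assumes "finsupp G p" "\<xi> \<in> l2 G"
  shows "lreg G p (\<lambda>x. c * \<xi> x) = (\<lambda>x. c * lreg G p \<xi> x)"
  using lreg_eq[OF assms(1) l2_scale(1)[OF assms(2)]] lreg_eq[OF assms(1,2)]
  by (simp add: lt_scale sum_distrib_left mult.left_commute)

lemma delta_finsupp: "g \<in> carrier G \<Longrightarrow> finsupp G (delta g)"
  by (simp add: finsupp_def delta_def)

lemma supp_delta[simp]: "supp (delta g) = {g}"
  by (auto simp: supp_def delta_def)

lemma ug_eq: "g \<in> carrier G \<Longrightarrow> \<xi> \<in> l2 G \<Longrightarrow> ug G g \<xi> = lt g \<xi>"
  unfolding ug_def using lreg_eq[OF delta_finsupp, of g \<xi>]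
  apply (simp add: delta_def[symmetric])
  apply (simp add: delta_def)
  done

lemma ug_nonl2: "\<xi> \<notin> l2 G \<Longrightarrow> ug G g \<xi> = (\<lambda>_. 0)"
  by (simp add: ug_def lreg_def)

lemma lt_lt: "g \<in> carrier G \<Longrightarrow> h \<in> carrier G \<Longrightarrow> \<xi> \<in> l2 G \<Longrightarrow> lt g (lt h \<xi>) = lt (g \<otimes> h) \<xi>"
  by (auto simp: lt_def inv_mult_group m_assoc)

lemma lt_one: "\<xi> \<in> l2 G \<Longrightarrow> lt \<one> \<xi> = \<xi>"
  by (auto simp: lt_def l2_outside)

lemma ug_inv: "g \<in> carrier G \<Longrightarrow> \<xi> \<in> l2 G \<Longrightarrow> ug G g (ug G (inv g) \<xi>) = \<xi>"
  by (simp add: ug_eq lt_l2 lt_lt lt_one)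

lemma ug_inv2: "g \<in> carrier G \<Longrightarrow> \<xi> \<in> l2 G \<Longrightarrow> ug G (inv g) (ug G g \<xi>) = \<xi>"
  by (simp add: ug_eq lt_l2 lt_lt lt_one)

lemma lreg_rt:
  assumes "finsupp G p" "\<xi> \<in> l2 G" "h \<in> carrier G"
  shows "lreg G p (rt h \<xi>) = rt h (lreg G p \<xi>)"
proof -
  have fs: "supp p \<subseteq> carrier G" using finsupp_supp[OF assms(1)] by auto
  show ?thesis
    unfolding lreg_eq[OF assms(1) rt_l2(1)[OF assms(3,2)]] lreg_eq[OF assms(1,2)]
  proof
    fix x
    show "(\<Sum>y\<in>supp p. p y * lt y (rt h \<xi>) x) = rt h (\<lambda>x. \<Sum>y\<in>supp p. p y * lt y \<xi> x) x"
      using fs assms(3) by (cases "x \<in> carrier G") (auto simp: rt_def lt_def m_assoc intro!: sum.cong)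
  qed
qed

lemma lreg_zero: "lreg G p (\<lambda>_. 0) = (\<lambda>_. 0)"
  by (auto simp: lreg_def)

end



lemma approx_zero:
  assumes "D \<in> l2 G" "K \<ge> 0" "\<And>e. e > 0 \<Longrightarrow> l2norm G D \<le> e * K"
  shows "D = (\<lambda>_. 0)"
proof (rule l2norm_small_zero[OF assms(1)])
  fix e :: real assume e: "e > 0"
  have "l2norm G D \<le> (e / (K + 1)) * K" using assms(3)[of "e / (K+1)"] e assms(2) by simp
  also have "\<dots> \<le> e" using e assms(2) by (simp add: field_simps)
  finally show "l2norm G D \<le> e" .
qed

lemma l2_tri3:
  assumes "a \<in> l2 G" "b \<in> l2 G" "c \<in> l2 G"
  shows "(\<lambda>x. a x - b x - c x) \<in> l2 G"
        "l2norm G (\<lambda>x. a x - b x - c x) \<le> l2norm G a + l2norm G b + l2norm G c"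
proof -
  note d1 = l2_diff[OF assms(1,2)]
  note d2 = l2_diff[OF d1(1) assms(3)]
  show "(\<lambda>x. a x - b x - c x) \<in> l2 G" using d2 by simp
  show "l2norm G (\<lambda>x. a x - b x - c x) \<le> l2norm G a + l2norm G b + l2norm G c"
    using d1(2) d2(2) by simp
qed

lemma l2_tri_eq:
  assumes "a \<in> l2 G" "b \<in> l2 G"
  shows "l2norm G a \<le> l2norm G (\<lambda>x. a x - b x) + l2norm G b"
proof -
  have "a = (\<lambda>x. (a x - b x) + b x)" by simp
  then show ?thesis using l2_add(2)[OF l2_diff(1)[OF assms] assms(2)] by simp
qed

context group
begin

lemma cs_l2: "T \<in> cstar_of G B \<Longrightarrow> \<xi> \<in> l2 G \<Longrightarrow> T \<xi> \<in> l2 G"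
  by (simp add: cstar_of_def)

lemma cs_nonl2: "T \<in> cstar_of G B \<Longrightarrow> \<xi> \<notin> l2 G \<Longrightarrow> T \<xi> = (\<lambda>_. 0)"
  by (simp add: cstar_of_def)

lemma cs_approx:
  assumes "T \<in> cstar_of G B" "e > 0"
  obtains p where "finsupp G p" "supp p \<subseteq> B"
    "\<And>\<xi>. \<xi> \<in> l2 G \<Longrightarrow> l2norm G (\<lambda>x. T \<xi> x - lreg G p \<xi> x) \<le> e * l2norm G \<xi>"
  using assms unfolding cstar_of_def op_close_def supp_def by blast

lemma cs_mono: "B \<subseteq> B' \<Longrightarrow> cstar_of G B \<subseteq> cstar_of G B'"
  unfolding cstar_of_def by blast

lemma lreg_cstar:
  assumes "finsupp G p" "supp p \<subseteq> B"
  shows "lreg G p \<in> cstar_of G B"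
  unfolding cstar_of_def op_close_def
proof (intro CollectI conjI allI ballI impI)
  fix \<xi> :: "'a \<Rightarrow> complex"
  assume "\<xi> \<in> l2 G" then show "lreg G p \<xi> \<in> l2 G" using lreg_l2[OF assms(1)] by simp
next
  fix \<xi> :: "'a \<Rightarrow> complex"
  assume "\<xi> \<notin> l2 G" then show "lreg G p \<xi> = (\<lambda>_. 0)" by (rule lreg_nonl2)
next
  fix e :: real assume "e > 0"
  then show "\<exists>q. finsupp G q \<and> {x. q x \<noteq> 0} \<subseteq> B \<and>
     (\<forall>\<xi>\<in>l2 G. l2norm G (\<lambda>x. lreg G p \<xi> x - lreg G q \<xi> x) \<le> e * l2norm G \<xi>)"
    using assms by (intro exI[of _ p]) (auto simp: supp_def)
qed

lemma ug_cred: "g \<in> carrier G \<Longrightarrow> ug G g \<in> Cred G"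
  unfolding ug_def Cred_def delta_def[symmetric]
  by (rule lreg_cstar) (auto simp: delta_finsupp)

lemma cs_bounded:
  assumes "T \<in> cstar_of G B"
  obtains M where "M \<ge> 0" "\<And>\<xi>. \<xi> \<in> l2 G \<Longrightarrow> l2norm G (T \<xi>) \<le> M * l2norm G \<xi>"
proof -
  obtain p where p: "finsupp G p"
    "\<And>\<xi>. \<xi> \<in> l2 G \<Longrightarrow> l2norm G (\<lambda>x. T \<xi> x - lreg G p \<xi> x) \<le> 1 * l2norm G \<xi>"
    using cs_approx[OF assms zero_less_one] by metis
  have "l2norm G (T \<xi>) \<le> (1 + pn p) * l2norm G \<xi>" if "\<xi> \<in> l2 G" for \<xi>
  proof -
    have "l2norm G (T \<xi>) \<le> l2norm G (\<lambda>x. T \<xi> x - lreg G p \<xi> x) + l2norm G (lreg G p \<xi>)"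
      using l2_tri_eq[OF cs_l2[OF assms that] lreg_l2(1)[OF p(1) that]] .
    also have "\<dots> \<le> 1 * l2norm G \<xi> + pn p * l2norm G \<xi>"
      using p(2)[OF that] lreg_l2(2)[OF p(1) that] by linarith
    finally show ?thesis by (simp add: algebra_simps)
  qed
  then show ?thesis using that[of "1 + pn p"] by simp
qed

lemma cs_add:
  assumes "T \<in> cstar_of G B" "\<xi> \<in> l2 G" "\<eta> \<in> l2 G"
  shows "T (\<lambda>x. \<xi> x + \<eta> x) = (\<lambda>x. T \<xi> x + T \<eta> x)"
proof -
  let ?s = "\<lambda>x. \<xi> x + \<eta> x"
  have s: "?s \<in> l2 G" using l2_add[OF assms(2,3)] by simp
  let ?D = "\<lambda>x. T ?s x - T \<xi> x - T \<eta> x"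
  have D: "?D \<in> l2 G" using l2_tri3(1)[OF cs_l2[OF assms(1) s] cs_l2[OF assms(1,2)] cs_l2[OF assms(1,3)]] .
  have "?D = (\<lambda>_. 0)"
  proof (rule approx_zero[OF D, where K="l2norm G ?s + l2norm G \<xi> + l2norm G \<eta>"])
    show "0 \<le> l2norm G ?s + l2norm G \<xi> + l2norm G \<eta>" by simp
  next
    fix e :: real assume e: "e > 0"
    obtain p where p: "finsupp G p"
      "\<And>\<xi>. \<xi> \<in> l2 G \<Longrightarrow> l2norm G (\<lambda>x. T \<xi> x - lreg G p \<xi> x) \<le> e * l2norm G \<xi>"
      using cs_approx[OF assms(1) e] by metis
    have la: "lreg G p ?s = (\<lambda>x. lreg G p \<xi> x + lreg G p \<eta> x)" using lreg_add[OF p(1) assms(2,3)] .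
    have eq: "?D = (\<lambda>x. (T ?s x - lreg G p ?s x) - (T \<xi> x - lreg G p \<xi> x) - (T \<eta> x - lreg G p \<eta> x))"
      unfolding la by (auto simp: algebra_simps)
    have "l2norm G ?D \<le> e * l2norm G ?s + e * l2norm G \<xi> + e * l2norm G \<eta>"
      unfolding eq
      using l2_tri3(2)[OF l2_diff(1)[OF cs_l2[OF assms(1) s] lreg_l2(1)[OF p(1) s]]
         l2_diff(1)[OF cs_l2[OF assms(1,2)] lreg_l2(1)[OF p(1) assms(2)]]
         l2_diff(1)[OF cs_l2[OF assms(1,3)] lreg_l2(1)[OF p(1) assms(3)]]]
        p(2)[OF s] p(2)[OF assms(2)] p(2)[OF assms(3)] by linarith
    then show "l2norm G ?D \<le> e * (l2norm G ?s + l2norm G \<xi> + l2norm G \<eta>)"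
      by (simp add: algebra_simps)
  qed
  then show ?thesis by (metis (no_types, lifting) diff_diff_eq eq_iff_diff_eq_0)
qed

lemma cs_scale:
  assumes "T \<in> cstar_of G B" "\<xi> \<in> l2 G"
  shows "T (\<lambda>x. c * \<xi> x) = (\<lambda>x. c * T \<xi> x)"
proof -
  let ?s = "\<lambda>x. c * \<xi> x"
  have s: "?s \<in> l2 G" using l2_scale[OF assms(2)] by simp
  let ?D = "\<lambda>x. T ?s x - c * T \<xi> x"
  have D: "?D \<in> l2 G" using l2_diff(1)[OF cs_l2[OF assms(1) s] l2_scale(1)[OF cs_l2[OF assms(1,2)]]] .
  have "?D = (\<lambda>_. 0)"
  proof (rule approx_zero[OF D, where K="l2norm G ?s + cmod c * l2norm G \<xi>"])
    show "0 \<le> l2norm G ?s + cmod c * l2norm G \<xi>" by simp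
  next
    fix e :: real assume e: "e > 0"
    obtain p where p: "finsupp G p"
      "\<And>\<xi>. \<xi> \<in> l2 G \<Longrightarrow> l2norm G (\<lambda>x. T \<xi> x - lreg G p \<xi> x) \<le> e * l2norm G \<xi>"
      using cs_approx[OF assms(1) e] by metis
    have la: "lreg G p ?s = (\<lambda>x. c * lreg G p \<xi> x)" using lreg_scale[OF p(1) assms(2)] .
    have eq: "?D = (\<lambda>x. (T ?s x - lreg G p ?s x) - c * (T \<xi> x - lreg G p \<xi> x))"
      unfolding la by (auto simp: algebra_simps)
    have d2: "(\<lambda>x. T \<xi> x - lreg G p \<xi> x) \<in> l2 G"
      using l2_diff(1)[OF cs_l2[OF assms(1,2)] lreg_l2(1)[OF p(1) assms(2)]] .
    have "l2norm G ?D \<le> l2norm G (\<lambda>x. T ?s x - lreg G p ?s x) + l2norm G (\<lambda>x. c * (T \<xi> x - lreg G p \<xi> x))"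
      unfolding eq
      using l2_diff(2)[OF l2_diff(1)[OF cs_l2[OF assms(1) s] lreg_l2(1)[OF p(1) s]] l2_scale(1)[OF d2]] .
    also have "\<dots> \<le> e * l2norm G ?s + cmod c * (e * l2norm G \<xi>)"
      using p(2)[OF s] p(2)[OF assms(2)] l2_scale(2)[OF d2, of c]
      by (simp add: mult_left_mono add_mono)
    finally show "l2norm G ?D \<le> e * (l2norm G ?s + cmod c * l2norm G \<xi>)"
      by (simp add: algebra_simps)
  qed
  then show ?thesis by (metis (no_types, lifting) eq_iff_diff_eq_0)
qed

lemma cs_zero:
  assumes "T \<in> cstar_of G B"
  shows "T (\<lambda>_. 0) = (\<lambda>_. 0)"
  using cs_scale[OF assms l2_zero(1), of 0] by simp

lemma cs_sum:
  assumes "T \<in> cstar_of G B" "finite S" "\<And>i. i \<in> S \<Longrightarrow> \<xi> i \<in> l2 G"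
  shows "T (\<lambda>x. \<Sum>i\<in>S. c i * \<xi> i x) = (\<lambda>x. \<Sum>i\<in>S. c i * T (\<xi> i) x)"
  using assms(2,3)
proof (induction S rule: finite_induct)
  case empty
  then show ?case using cs_zero[OF assms(1)] by simp
next
  case (insert a S)
  have l: "(\<lambda>x. \<Sum>i\<in>S. c i * \<xi> i x) \<in> l2 G"
    using l2_sum[OF insert.hyps(1), of "\<lambda>i x. c i * \<xi> i x" G] l2_scale(1) insert.prems by blast
  have a: "\<xi> a \<in> l2 G" using insert.prems by blast
  have eq: "(\<lambda>x. \<Sum>i\<in>insert a S. c i * \<xi> i x) = (\<lambda>x. c a * \<xi> a x + (\<Sum>i\<in>S. c i * \<xi> i x))"
    using insert.hyps by simp
  have eq2: "(\<lambda>x. \<Sum>i\<in>insert a S. c i * T (\<xi> i) x) = (\<lambda>x. c a * T (\<xi> a) x + (\<Sum>i\<in>S. c i * T (\<xi> i) x))"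
    using insert.hyps by simp
  have IH: "T (\<lambda>x. \<Sum>i\<in>S. c i * \<xi> i x) = (\<lambda>x. \<Sum>i\<in>S. c i * T (\<xi> i) x)"
    using insert.IH insert.prems by blast
  show ?case unfolding eq eq2
    using cs_add[OF assms(1) l2_scale(1)[OF a] l] cs_scale[OF assms(1) a] IH by simp
qed

end



lemma diff3: "(a::complex) - b = (a - c) - (b - c)" by simp

context group
begin

lemma cs_diff:
  assumes "T \<in> cstar_of G B" "a \<in> l2 G" "b \<in> l2 G"
  shows "T (\<lambda>x. a x - b x) = (\<lambda>x. T a x - T b x)"
proof -
  have n: "(\<lambda>x. (-1) * b x) \<in> l2 G" using l2_scale(1)[OF assms(3)] .
  have "T (\<lambda>x. a x + (-1) * b x) = (\<lambda>x. T a x + T (\<lambda>x. (-1) * b x) x)"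
    using cs_add[OF assms(1,2) n] .
  also have "\<dots> = (\<lambda>x. T a x - T b x)" using cs_scale[OF assms(1,3), of "-1"] by simp
  finally show ?thesis by simp
qed

lemma rt_diff: "rt h (\<lambda>x. a x - b x) = (\<lambda>x. rt h a x - rt h b x)"
  by (auto simp: rt_def)

lemma cs_rt:
  assumes "T \<in> cstar_of G B" "h \<in> carrier G" "\<xi> \<in> l2 G"
  shows "T (rt h \<xi>) = rt h (T \<xi>)"
proof -
  have r: "rt h \<xi> \<in> l2 G" using rt_l2[OF assms(2,3)] by simp
  let ?D = "\<lambda>x. T (rt h \<xi>) x - rt h (T \<xi>) x"
  have D: "?D \<in> l2 G" using l2_diff(1)[OF cs_l2[OF assms(1) r] rt_l2(1)[OF assms(2) cs_l2[OF assms(1,3)]]] .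
  have "?D = (\<lambda>_. 0)"
  proof (rule approx_zero[OF D, where K="2 * l2norm G \<xi>"])
    show "0 \<le> 2 * l2norm G \<xi>" by simp
  next
    fix e :: real assume e: "e > 0"
    obtain p where p: "finsupp G p"
      "\<And>\<xi>. \<xi> \<in> l2 G \<Longrightarrow> l2norm G (\<lambda>x. T \<xi> x - lreg G p \<xi> x) \<le> e * l2norm G \<xi>"
      using cs_approx[OF assms(1) e] by metis
    have d1: "(\<lambda>x. T (rt h \<xi>) x - lreg G p (rt h \<xi>) x) \<in> l2 G"
      using l2_diff(1)[OF cs_l2[OF assms(1) r] lreg_l2(1)[OF p(1) r]] .
    have d2: "(\<lambda>x. T \<xi> x - lreg G p \<xi> x) \<in> l2 G"
      using l2_diff(1)[OF cs_l2[OF assms(1,3)] lreg_l2(1)[OF p(1) assms(3)]] .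
    have eq: "?D = (\<lambda>x. (T (rt h \<xi>) x - lreg G p (rt h \<xi>) x) - rt h (\<lambda>x. T \<xi> x - lreg G p \<xi> x) x)"
      apply (rule ext)
      apply (simp only: lreg_rt[OF p(1) assms(3,2)] rt_diff)
      apply (rule diff3)
      done
    have "l2norm G ?D \<le> e * l2norm G (rt h \<xi>) + e * l2norm G \<xi>"
      unfolding eq using l2_diff(2)[OF d1 rt_l2(1)[OF assms(2) d2]] rt_l2(2)[OF assms(2) d2]
        p(2)[OF r] p(2)[OF assms(3)] by linarith
    then show "l2norm G ?D \<le> e * (2 * l2norm G \<xi>)"
      using rt_l2(2)[OF assms(2,3)] by (simp add: algebra_simps)
  qed
  then have z: "\<And>x. ?D x = 0" by (simp add: fun_eq_iff)
  then show ?thesis by (simp add: fun_eq_iff)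
qed

lemma fixed_lt:
  assumes "T \<in> cstar_of G B" "g \<in> carrier G"
    "(\<lambda>\<xi>. ug G g (T (ug G (inv g) \<xi>))) = T" "\<eta> \<in> l2 G"
  shows "T (lt g \<eta>) = lt g (T \<eta>)"
proof -
  have l: "lt g \<eta> \<in> l2 G" using lt_l2[OF assms(2,4)] by simp
  have "T (lt g \<eta>) = ug G g (T (ug G (inv g) (lt g \<eta>)))" using fun_cong[OF assms(3), of "lt g \<eta>"] by simp
  also have "ug G (inv g) (lt g \<eta>) = \<eta>" using ug_inv2[OF assms(2,4)] ug_eq[OF assms(2,4)] by simp
  finally show ?thesis using ug_eq[OF assms(2) cs_l2[OF assms(1,4)]] by simp
qed

lemma comm_lreg:
  assumes "T \<in> cstar_of G B" "\<And>g \<eta>. g \<in> carrier G \<Longrightarrow> \<eta> \<in> l2 G \<Longrightarrow> T (lt g \<eta>) = lt g (T \<eta>)"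
    "finsupp G p" "\<eta> \<in> l2 G"
  shows "T (lreg G p \<eta>) = lreg G p (T \<eta>)"
proof -
  have fs: "finite (supp p)" "supp p \<subseteq> carrier G" using finsupp_supp[OF assms(3)] by auto
  have "T (lreg G p \<eta>) = (\<lambda>x. \<Sum>y\<in>supp p. p y * T (lt y \<eta>) x)"
    unfolding lreg_eq[OF assms(3,4)] using cs_sum[OF assms(1) fs(1), of "\<lambda>y. lt y \<eta>" p] fs(2) lt_l2(1)[OF _ assms(4)]
    by blast
  also have "\<dots> = (\<lambda>x. \<Sum>y\<in>supp p. p y * lt y (T \<eta>) x)"
    using assms(2)[OF _ assms(4)] fs(2) by (intro ext sum.cong) auto
  also have "\<dots> = lreg G p (T \<eta>)" using lreg_eq[OF assms(3) cs_l2[OF assms(1,4)]] by simp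
  finally show ?thesis .
qed

lemma comm_cred:
  assumes "T \<in> cstar_of G B" "\<And>g \<eta>. g \<in> carrier G \<Longrightarrow> \<eta> \<in> l2 G \<Longrightarrow> T (lt g \<eta>) = lt g (T \<eta>)"
    "S \<in> Cred G"
  shows "T (S \<xi>) = S (T \<xi>)"
proof (cases "\<xi> \<in> l2 G")
  case False
  have S: "S \<in> cstar_of G (carrier G)" using assms(3) by (simp add: Cred_def)
  show ?thesis using False cs_nonl2[OF S False] cs_nonl2[OF assms(1) False] cs_zero[OF S] cs_zero[OF assms(1)]
    by simp
next
  case True
  have S: "S \<in> cstar_of G (carrier G)" using assms(3) by (simp add: Cred_def)
  obtain M where M: "M \<ge> 0" "\<And>\<xi>. \<xi> \<in> l2 G \<Longrightarrow> l2norm G (T \<xi>) \<le> M * l2norm G \<xi>"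
    using cs_bounded[OF assms(1)] by metis
  have Sx: "S \<xi> \<in> l2 G" using cs_l2[OF S True] .
  have Tx: "T \<xi> \<in> l2 G" using cs_l2[OF assms(1) True] .
  let ?D = "\<lambda>x. T (S \<xi>) x - S (T \<xi>) x"
  have D: "?D \<in> l2 G" using l2_diff(1)[OF cs_l2[OF assms(1) Sx] cs_l2[OF S Tx]] .
  have "?D = (\<lambda>_. 0)"
  proof (rule approx_zero[OF D, where K="M * l2norm G \<xi> + l2norm G (T \<xi>)"])
    show "0 \<le> M * l2norm G \<xi> + l2norm G (T \<xi>)" using M by simp
  next
    fix e :: real assume e: "e > 0"
    obtain p where p: "finsupp G p"
      "\<And>\<xi>. \<xi> \<in> l2 G \<Longrightarrow> l2norm G (\<lambda>x. S \<xi> x - lreg G p \<xi> x) \<le> e * l2norm G \<xi>"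
      using cs_approx[OF S e] by metis
    have lx: "lreg G p \<xi> \<in> l2 G" using lreg_l2(1)[OF p(1) True] .
    have d1: "(\<lambda>x. S \<xi> x - lreg G p \<xi> x) \<in> l2 G" using l2_diff(1)[OF Sx lx] .
    have d2: "(\<lambda>x. S (T \<xi>) x - lreg G p (T \<xi>) x) \<in> l2 G"
      using l2_diff(1)[OF cs_l2[OF S Tx] lreg_l2(1)[OF p(1) Tx]] .
    have eq: "?D = (\<lambda>x. T (\<lambda>x. S \<xi> x - lreg G p \<xi> x) x - (S (T \<xi>) x - lreg G p (T \<xi>) x))"
      by (rule ext) (simp add: cs_diff[OF assms(1) Sx lx] comm_lreg[OF assms(1,2) p(1) True])
    have "l2norm G ?D \<le> M * l2norm G (\<lambda>x. S \<xi> x - lreg G p \<xi> x) + e * l2norm G (T \<xi>)"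
      unfolding eq using l2_diff(2)[OF cs_l2[OF assms(1) d1] d2] M(2)[OF d1] p(2)[OF Tx] by linarith
    also have "\<dots> \<le> M * (e * l2norm G \<xi>) + e * l2norm G (T \<xi>)"
      using p(2)[OF True] M(1) by (simp add: mult_left_mono)
    finally show "l2norm G ?D \<le> e * (M * l2norm G \<xi> + l2norm G (T \<xi>))"
      by (simp add: algebra_simps)
  qed
  then have z: "\<And>x. ?D x = 0" by (simp add: fun_eq_iff)
  then show ?thesis by (simp add: fun_eq_iff)
qed

end



definition Pc :: "'x set \<Rightarrow> ('x \<Rightarrow> complex) \<Rightarrow> ('x \<Rightarrow> complex)" where
  "Pc C \<xi> = (\<lambda>y. if y \<in> C then \<xi> y else 0)"

lemma Pc_l2:
  assumes "\<xi> \<in> l2 G"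
  shows "Pc C \<xi> \<in> l2 G" "l2norm G (Pc C \<xi>) \<le> l2norm G \<xi>"
proof -
  have o: "\<And>x. x \<notin> carrier G \<Longrightarrow> Pc C \<xi> x = 0" using assms by (simp add: Pc_def l2_outside)
  have b: "L2_set (\<lambda>x. cmod (Pc C \<xi> x)) F \<le> l2norm G \<xi>" if "finite F" "F \<subseteq> carrier G" for F
  proof -
    have "L2_set (\<lambda>x. cmod (Pc C \<xi> x)) F \<le> L2_set (\<lambda>x. cmod (\<xi> x)) F"
      by (rule L2_set_mono) (auto simp: Pc_def)
    also have "\<dots> \<le> l2norm G \<xi>" using finite_L2_le[OF assms that] .
    finally show ?thesis .
  qed
  show "Pc C \<xi> \<in> l2 G" "l2norm G (Pc C \<xi>) \<le> l2norm G \<xi>" using l2_bound[of G "Pc C \<xi>", OF o b] by auto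
qed

lemma Pc_diff: "Pc C (\<lambda>x. a x - b x) = (\<lambda>x. Pc C a x - Pc C b x)"
  by (auto simp: Pc_def)

lemma Pc_sq:
  assumes "\<xi> \<in> l2 G" "C \<subseteq> carrier G"
  shows "(l2norm G (Pc C \<xi>))\<^sup>2 = infsum (sqf \<xi>) C"
  unfolding l2norm_sq
  by (rule infsum_cong_neutral) (use assms in \<open>auto simp: Pc_def sqf_def\<close>)

lemma density:
  assumes "\<xi> \<in> l2 G" "e > 0"
  shows "\<exists>F. finite F \<and> F \<subseteq> carrier G \<and> l2norm G (\<lambda>x. \<xi> x - Pc F \<xi> x) \<le> e"
proof -
  have s: "sqf \<xi> summable_on carrier G" using assms(1) by (simp add: l2_iff)
  obtain F where F: "finite F" "F \<subseteq> carrier G" "dist (sum (sqf \<xi>) F) (infsum (sqf \<xi>) (carrier G)) \<le> e\<^sup>2"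
    using infsum_finite_approximation[OF s, of "e\<^sup>2"] assms(2) by auto
  have d: "infsum (sqf \<xi>) (carrier G) - sum (sqf \<xi>) F \<le> e\<^sup>2" using F(3) by (simp add: dist_real_def)
  have o: "\<And>x. x \<notin> carrier G \<Longrightarrow> \<xi> x - Pc F \<xi> x = 0" using assms(1) F(2) by (auto simp: Pc_def l2_outside)
  have b: "L2_set (\<lambda>x. cmod (\<xi> x - Pc F \<xi> x)) F' \<le> e" if "finite F'" "F' \<subseteq> carrier G" for F'
  proof -
    have eq1: "(\<Sum>x\<in>F'. (cmod (\<xi> x - Pc F \<xi> x))\<^sup>2) = sum (sqf \<xi>) (F' - F)"
      using that by (intro sum.mono_neutral_cong_right) (auto simp: Pc_def sqf_def)
    have u: "sum (sqf \<xi>) (F' \<union> F) = sum (sqf \<xi>) (F' - F) + sum (sqf \<xi>) F"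
      using that F(1) by (metis Un_Diff_cancel2 Diff_disjoint finite_Diff sum.union_disjoint Int_commute)
    have "sum (sqf \<xi>) (F' \<union> F) \<le> infsum (sqf \<xi>) (carrier G)"
      using that F by (intro finite_sum_le_infsum[OF s]) auto
    then have "(\<Sum>x\<in>F'. (cmod (\<xi> x - Pc F \<xi> x))\<^sup>2) \<le> e\<^sup>2" using eq1 u d by linarith
    then have "sqrt (\<Sum>x\<in>F'. (cmod (\<xi> x - Pc F \<xi> x))\<^sup>2) \<le> sqrt (e\<^sup>2)" by (rule real_sqrt_le_mono)
    then show ?thesis using assms(2) by (simp add: L2_set_def)
  qed
  show ?thesis using l2_bound(2)[of G "\<lambda>x. \<xi> x - Pc F \<xi> x", OF o b] F(1,2) by blast
qed

lemma compression:
  fixes \<kappa> :: "'a \<Rightarrow> 'a set"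
  assumes k1: "\<And>x. x \<in> carrier G \<Longrightarrow> \<kappa> x \<subseteq> carrier G"
    and k2: "\<And>x x'. x \<in> carrier G \<Longrightarrow> x' \<in> carrier G \<Longrightarrow> \<kappa> x \<noteq> \<kappa> x' \<Longrightarrow> \<kappa> x \<inter> \<kappa> x' = {}"
    and D: "\<And>\<eta>. \<eta> \<in> l2 G \<Longrightarrow> D \<eta> \<in> l2 G \<and> l2norm G (D \<eta>) \<le> K * l2norm G \<eta>"
    and K: "K \<ge> 0" and xi: "\<xi> \<in> l2 G"
  shows "(\<lambda>x. if x \<in> carrier G then D (Pc (\<kappa> x) \<xi>) x else 0) \<in> l2 G \<and>
         l2norm G (\<lambda>x. if x \<in> carrier G then D (Pc (\<kappa> x) \<xi>) x else 0) \<le> K * l2norm G \<xi>"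
proof -
  let ?E = "\<lambda>x. if x \<in> carrier G then D (Pc (\<kappa> x) \<xi>) x else 0"
  have sx: "sqf \<xi> summable_on carrier G" using xi by (simp add: l2_iff)
  have o: "\<And>x. x \<notin> carrier G \<Longrightarrow> ?E x = 0" by simp
  have b: "L2_set (\<lambda>x. cmod (?E x)) F \<le> K * l2norm G \<xi>" if F: "finite F" "F \<subseteq> carrier G" for F
  proof -
    let ?q = "\<lambda>x. (cmod (?E x))\<^sup>2"
    have "sum ?q F = (\<Sum>C\<in>\<kappa> ` F. sum ?q {x \<in> F. \<kappa> x = C})"
      using F(1) by (rule sum.image_gen)
    also have "\<dots> \<le> (\<Sum>C\<in>\<kappa> ` F. K\<^sup>2 * infsum (sqf \<xi>) C)"
    proof (rule sum_mono)
      fix C assume "C \<in> \<kappa> ` F"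
      then obtain x0 where x0: "x0 \<in> F" "C = \<kappa> x0" by auto
      have Cc: "C \<subseteq> carrier G" using k1 x0 F(2) by auto
      have P: "Pc C \<xi> \<in> l2 G" using Pc_l2(1)[OF xi] .
      have DP: "D (Pc C \<xi>) \<in> l2 G" "l2norm G (D (Pc C \<xi>)) \<le> K * l2norm G (Pc C \<xi>)" using D[OF P] by auto
      have "sum ?q {x \<in> F. \<kappa> x = C} = sum (sqf (D (Pc C \<xi>))) {x \<in> F. \<kappa> x = C}"
        using F(2) by (intro sum.cong) (auto simp: sqf_def)
      also have "\<dots> \<le> infsum (sqf (D (Pc C \<xi>))) (carrier G)"
        using DP(1) F by (intro finite_sum_le_infsum) (auto simp: l2_iff)
      also have "\<dots> = (l2norm G (D (Pc C \<xi>)))\<^sup>2" by (simp add: l2norm_sq)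
      also have "\<dots> \<le> (K * l2norm G (Pc C \<xi>))\<^sup>2" using DP(2) by (intro power_mono) auto
      also have "\<dots> = K\<^sup>2 * infsum (sqf \<xi>) C" using Pc_sq[OF xi Cc] by (simp add: power_mult_distrib)
      finally show "sum ?q {x \<in> F. \<kappa> x = C} \<le> K\<^sup>2 * infsum (sqf \<xi>) C" .
    qed
    also have "\<dots> = K\<^sup>2 * (\<Sum>C\<in>\<kappa> ` F. infsum (sqf \<xi>) C)" by (simp add: sum_distrib_left)
    also have "(\<Sum>C\<in>\<kappa> ` F. infsum (sqf \<xi>) C) = infsum (sqf \<xi>) (\<Union>C\<in>\<kappa> ` F. C)"
    proof (rule sum_infsum)
      show "finite (\<kappa> ` F)" using F(1) by simp
      show "\<And>C. C \<in> \<kappa> ` F \<Longrightarrow> sqf \<xi> summable_on C"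
        using sx k1 F(2) by (auto intro: summable_on_subset_banach)
      show "\<And>C C'. C \<in> \<kappa> ` F \<Longrightarrow> C' \<in> \<kappa> ` F \<Longrightarrow> C \<noteq> C' \<Longrightarrow> C \<inter> C' = {}"
        using k2 F(2) by auto
    qed
    also have "infsum (sqf \<xi>) (\<Union>C\<in>\<kappa> ` F. C) \<le> infsum (sqf \<xi>) (carrier G)"
    proof (rule infsum_mono2)
      show "sqf \<xi> summable_on (\<Union>C\<in>\<kappa> ` F. C)" using sx k1 F(2) by (auto intro: summable_on_subset_banach)
    qed (use sx k1 F(2) in auto)
    also have "\<dots> = (l2norm G \<xi>)\<^sup>2" by (simp add: l2norm_sq)
    finally have "sum ?q F \<le> (K * l2norm G \<xi>)\<^sup>2"
      by (simp add: power_mult_distrib mult_left_mono)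
    then have "sqrt (sum ?q F) \<le> sqrt ((K * l2norm G \<xi>)\<^sup>2)" by (rule real_sqrt_le_mono)
    then show ?thesis using K by (simp add: L2_set_def)
  qed
  show ?thesis using l2_bound[of G ?E, OF o b] by auto
qed



context group
begin

definition kap :: "'a set \<Rightarrow> 'a \<Rightarrow> 'a set" where
  "kap A x = {y \<in> carrier G. y \<otimes> inv x \<in> A}"

lemma kap_sub: "kap A x \<subseteq> carrier G" by (auto simp: kap_def)

lemma kap_mem:
  assumes "subgroup A G" "x \<in> carrier G" "y \<in> carrier G"
  shows "y \<in> kap A x \<longleftrightarrow> x \<in> kap A y"
proof -
  have "inv (y \<otimes> inv x) = x \<otimes> inv y" using assms by (simp add: inv_mult_group)
  moreover have "inv (x \<otimes> inv y) = y \<otimes> inv x" using assms by (simp add: inv_mult_group)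
  ultimately show ?thesis using assms unfolding kap_def
    by (metis (no_types, lifting) inv_closed m_closed mem_Collect_eq subgroup.m_inv_closed)
qed

lemma kap_eq:
  assumes "subgroup A G" "x \<in> carrier G" "x' \<in> carrier G" "x \<otimes> inv x' \<in> A"
  shows "kap A x = kap A x'"
proof -
  have 1: "z \<otimes> inv x' \<in> A" if "z \<in> carrier G" "z \<otimes> inv x \<in> A" for z
  proof -
    have "z \<otimes> inv x' = (z \<otimes> inv x) \<otimes> (x \<otimes> inv x')" using assms that by (simp add: m_assoc[symmetric]) (simp add: m_assoc)
    then show ?thesis using assms(1,4) that by (simp add: subgroup.m_closed)
  qed
  have 2: "z \<otimes> inv x \<in> A" if "z \<in> carrier G" "z \<otimes> inv x' \<in> A" for z
  proof -
    have i: "inv (x \<otimes> inv x') \<in> A" using assms by (simp add: subgroup.m_inv_closed)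
    have "z \<otimes> inv x = (z \<otimes> inv x') \<otimes> inv (x \<otimes> inv x')"
      using assms that by (simp add: inv_mult_group m_assoc[symmetric]) (simp add: m_assoc)
    then show ?thesis using assms(1) i that by (simp add: subgroup.m_closed)
  qed
  show ?thesis unfolding kap_def using 1 2 by blast
qed

lemma kap_disj:
  assumes "subgroup A G" "x \<in> carrier G" "x' \<in> carrier G" "kap A x \<noteq> kap A x'"
  shows "kap A x \<inter> kap A x' = {}"
proof (rule ccontr)
  assume "kap A x \<inter> kap A x' \<noteq> {}"
  then obtain y where y: "y \<in> carrier G" "y \<otimes> inv x \<in> A" "y \<otimes> inv x' \<in> A" by (auto simp: kap_def)
  have "x \<otimes> inv x' = inv (y \<otimes> inv x) \<otimes> (y \<otimes> inv x')"
    using y assms by (simp add: inv_mult_group m_assoc[symmetric]) (simp add: m_assoc)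
  also have "\<dots> \<in> A" using y assms(1) by (simp add: subgroup.m_closed subgroup.m_inv_closed)
  finally have "kap A x = kap A x'" using kap_eq assms by blast
  then show False using assms(4) by simp
qed

lemma delta_l2: "h \<in> carrier G \<Longrightarrow> delta h \<in> l2 G"
proof -
  assume h: "h \<in> carrier G"
  have o: "\<And>x. x \<notin> carrier G \<Longrightarrow> delta h x = 0" using h by (auto simp: delta_def)
  have b: "L2_set (\<lambda>x. cmod (delta h x)) F \<le> 1" if "finite F" for F
  proof -
    have "(\<Sum>x\<in>F. (cmod (delta h x))\<^sup>2) = (\<Sum>x\<in>F. if x = h then 1 else 0)"
      by (intro sum.cong) (auto simp: delta_def)
    also have "\<dots> \<le> 1" using that by (simp add: sum.delta')
    finally show ?thesis by (simp add: L2_set_def)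
  qed
  show ?thesis using l2_bound(1)[of G "delta h", OF o b] by blast
qed

lemma Pc_as_sum:
  assumes "finite F"
  shows "Pc F \<xi> = (\<lambda>x. \<Sum>h\<in>F. \<xi> h * delta h x)"
proof
  fix x
  have "(\<Sum>h\<in>F. \<xi> h * delta h x) = (\<Sum>h\<in>F. if h = x then \<xi> h else 0)"
    by (intro sum.cong) (auto simp: delta_def)
  also have "\<dots> = Pc F \<xi> x" using assms by (simp add: sum.delta Pc_def)
  finally show "Pc F \<xi> x = (\<Sum>h\<in>F. \<xi> h * delta h x)" by simp
qed

lemma rt_delta: "h \<in> carrier G \<Longrightarrow> rt (inv h) (delta \<one>) = delta h"
proof
  fix y assume h: "h \<in> carrier G"
  show "rt (inv h) (delta \<one>) y = delta h y"
  proof (cases "y \<in> carrier G")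
    case True
    have "y \<otimes> inv h = \<one> \<longleftrightarrow> y = h" using True h
      by (metis inv_closed inv_equality inv_inv r_inv)
    then show ?thesis using True by (simp add: rt_def delta_def)
  next
    case False
    then show ?thesis using h by (auto simp: rt_def delta_def)
  qed
qed

lemma lt_delta: "g \<in> carrier G \<Longrightarrow> lt g (delta \<one>) = delta g"
proof
  fix y assume g: "g \<in> carrier G"
  show "lt g (delta \<one>) y = delta g y"
  proof (cases "y \<in> carrier G")
    case True
    have "inv g \<otimes> y = \<one> \<longleftrightarrow> y = g" using True g
      by (metis inv_closed inv_equality inv_inv l_inv)
    then show ?thesis using True by (simp add: lt_def delta_def)
  next
    case False
    then show ?thesis using g by (auto simp: lt_def delta_def)
  qed
qed

lemma T_delta:
  assumes "T \<in> cstar_of G B" "h \<in> carrier G" "y \<in> carrier G"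
  shows "T (delta h) y = T (delta \<one>) (y \<otimes> inv h)"
proof -
  have "T (delta h) = T (rt (inv h) (delta \<one>))" using rt_delta[OF assms(2)] by simp
  also have "\<dots> = rt (inv h) (T (delta \<one>))" using cs_rt[OF assms(1) _ delta_l2] assms(2) by simp
  finally show ?thesis using assms(3) by (simp add: rt_def)
qed

lemma key_pointwise:
  assumes A: "subgroup A G" and T: "T \<in> cstar_of G B"
    and f: "\<And>z. z \<notin> A \<Longrightarrow> T (delta \<one>) z = 0"
    and xi: "\<xi> \<in> l2 G" and x: "x \<in> carrier G"
  shows "T (Pc (kap A x) \<xi>) x = T \<xi> x"
proof -
  let ?K = "kap A x"
  obtain M where M: "M \<ge> 0" "\<And>\<xi>. \<xi> \<in> l2 G \<Longrightarrow> l2norm G (T \<xi>) \<le> M * l2norm G \<xi>"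
    using cs_bounded[OF T] by metis
  have fin: "T (Pc ?K (Pc F \<xi>)) x = T (Pc F \<xi>) x" if F: "finite F" "F \<subseteq> carrier G" for F
  proof -
    have e1: "Pc ?K (Pc F \<xi>) = Pc (F \<inter> ?K) \<xi>" by (auto simp: Pc_def)
    have s1: "T (Pc S \<xi>) = (\<lambda>y. \<Sum>h\<in>S. \<xi> h * T (delta h) y)" if "finite S" "S \<subseteq> carrier G" for S
      unfolding Pc_as_sum[OF that(1)] using cs_sum[OF T that(1), of delta \<xi>] delta_l2 that(2) by blast
    have sK: "T (Pc (F \<inter> ?K) \<xi>) = (\<lambda>y. \<Sum>h\<in>F \<inter> ?K. \<xi> h * T (delta h) y)"
      by (rule s1) (use F in auto)
    have "T (Pc (F \<inter> ?K) \<xi>) x = (\<Sum>h\<in>F \<inter> ?K. \<xi> h * T (delta h) x)" using sK by simp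
    also have "\<dots> = (\<Sum>h\<in>F. \<xi> h * T (delta h) x)"
    proof (rule sum.mono_neutral_left)
      show "finite F" using F by simp
      show "F \<inter> ?K \<subseteq> F" by auto
      show "\<forall>h\<in>F - F \<inter> ?K. \<xi> h * T (delta h) x = 0"
      proof
        fix h assume h: "h \<in> F - F \<inter> ?K"
        then have hc: "h \<in> carrier G" using F by auto
        have "h \<notin> ?K" using h by auto
        then have "x \<notin> kap A h" using kap_mem[OF A x hc] by simp
        then have "x \<otimes> inv h \<notin> A" using x by (simp add: kap_def)
        then show "\<xi> h * T (delta h) x = 0" using T_delta[OF T hc x] f by simp
      qed
    qed
    also have "\<dots> = T (Pc F \<xi>) x" using s1[OF F] by simp
    finally show ?thesis using e1 by simp
  qed
  let ?z = "T (Pc ?K \<xi>) x - T \<xi> x"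
  have bnd: "cmod ?z \<le> e * (2 * M)" if e: "e > 0" for e
  proof -
    obtain F where F: "finite F" "F \<subseteq> carrier G" "l2norm G (\<lambda>y. \<xi> y - Pc F \<xi> y) \<le> e"
      using density[OF xi e] by blast
    let ?\<eta> = "\<lambda>y. \<xi> y - Pc F \<xi> y"
    have PF: "Pc F \<xi> \<in> l2 G" using Pc_l2(1)[OF xi] .
    have \<eta>: "?\<eta> \<in> l2 G" using l2_diff(1)[OF xi PF] .
    have PK\<eta>: "Pc ?K ?\<eta> \<in> l2 G" using Pc_l2(1)[OF \<eta>] .
    have PKF: "Pc ?K (Pc F \<xi>) \<in> l2 G" using Pc_l2(1)[OF PF] .
    have xe: "\<xi> = (\<lambda>y. ?\<eta> y + Pc F \<xi> y)" by simp
    have Pe: "Pc ?K \<xi> = (\<lambda>y. Pc ?K ?\<eta> y + Pc ?K (Pc F \<xi>) y)" by (auto simp: Pc_def)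
    have t1: "T (Pc ?K \<xi>) x = T (Pc ?K ?\<eta>) x + T (Pc ?K (Pc F \<xi>)) x"
      using cs_add[OF T PK\<eta> PKF] Pe by metis
    have t2: "T \<xi> x = T ?\<eta> x + T (Pc F \<xi>) x"
      using cs_add[OF T \<eta> PF] xe by metis
    have "?z = T (Pc ?K ?\<eta>) x - T ?\<eta> x" using t1 t2 fin[OF F(1,2)] by simp
    then have "cmod ?z \<le> cmod (T (Pc ?K ?\<eta>) x) + cmod (T ?\<eta> x)" by (simp add: norm_triangle_ineq4)
    also have "\<dots> \<le> M * l2norm G (Pc ?K ?\<eta>) + M * l2norm G ?\<eta>"
      using l2_point[OF cs_l2[OF T PK\<eta>], of x] l2_point[OF cs_l2[OF T \<eta>], of x] M(2)[OF PK\<eta>] M(2)[OF \<eta>]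
      by linarith
    also have "\<dots> \<le> M * e + M * e"
      using Pc_l2(2)[OF \<eta>, of ?K] F(3) M(1) by (intro add_mono mult_left_mono) auto
    finally show ?thesis by (simp add: algebra_simps)
  qed
  have "cmod ?z \<le> 0"
  proof (rule field_le_epsilon)
    fix e :: real assume e: "0 < e"
    have "cmod ?z \<le> (e / (2 * M + 1)) * (2 * M)" using bnd[of "e / (2 * M + 1)"] e M(1) by simp
    also have "\<dots> \<le> e" using e M(1) by (simp add: field_simps)
    finally show "cmod ?z \<le> 0 + e" by simp
  qed
  then show ?thesis by simp
qed

end



context group
begin

lemma lreg_restrict:
  assumes A: "subgroup A G" and p: "finsupp G p" and xi: "\<xi> \<in> l2 G" and x: "x \<in> carrier G"
  shows "lreg G p (Pc (kap A x) \<xi>) x = lreg G (\<lambda>y. if y \<in> A then p y else 0) \<xi> x"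
proof -
  let ?q = "\<lambda>y. if y \<in> A then p y else 0"
  have fs: "finite (supp p)" "supp p \<subseteq> carrier G" using finsupp_supp[OF p] by auto
  have P: "Pc (kap A x) \<xi> \<in> l2 G" using Pc_l2(1)[OF xi] .
  have "lreg G p (Pc (kap A x) \<xi>) x = (\<Sum>y\<in>supp p. p y * Pc (kap A x) \<xi> (inv y \<otimes> x))"
    using P x by (simp add: lreg_def supp_def)
  also have "\<dots> = (\<Sum>y\<in>supp p. if y \<in> A then p y * \<xi> (inv y \<otimes> x) else 0)"
  proof (rule sum.cong)
    fix y assume y: "y \<in> supp p"
    then have yc: "y \<in> carrier G" using fs by auto
    have e: "inv y \<otimes> x \<otimes> inv x = inv y" using yc x by (simp add: m_assoc)
    have "inv y \<otimes> x \<in> kap A x \<longleftrightarrow> y \<in> A"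
      using yc x A e unfolding kap_def
      by (metis (no_types, lifting) inv_closed inv_inv m_closed mem_Collect_eq subgroup.m_inv_closed)
    then show "p y * Pc (kap A x) \<xi> (inv y \<otimes> x) = (if y \<in> A then p y * \<xi> (inv y \<otimes> x) else 0)"
      by (simp add: Pc_def)
  qed simp
  also have "\<dots> = (\<Sum>y\<in>{y \<in> supp p. y \<in> A}. p y * \<xi> (inv y \<otimes> x))"
    using fs(1) by (simp add: sum.inter_filter)
  also have "{y \<in> supp p. y \<in> A} = {y. ?q y \<noteq> 0}" by (auto simp: supp_def)
  also have "(\<Sum>y\<in>{y. ?q y \<noteq> 0}. p y * \<xi> (inv y \<otimes> x)) = (\<Sum>y\<in>{y. ?q y \<noteq> 0}. ?q y * \<xi> (inv y \<otimes> x))"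
    by (rule sum.cong) auto
  also have "\<dots> = lreg G ?q \<xi> x" using xi x by (simp add: lreg_def)
  finally show ?thesis .
qed

lemma restrict_in_cstar:
  assumes A: "subgroup A G" and T: "T \<in> cstar_of G B"
    and f: "\<And>z. z \<notin> A \<Longrightarrow> T (delta \<one>) z = 0"
  shows "T \<in> cstar_of G A"
  unfolding cstar_of_def
proof (intro CollectI conjI allI ballI impI)
  fix \<xi> :: "'a \<Rightarrow> complex" assume "\<xi> \<in> l2 G" then show "T \<xi> \<in> l2 G" using cs_l2[OF T] by simp
next
  fix \<xi> :: "'a \<Rightarrow> complex" assume "\<xi> \<notin> l2 G" then show "T \<xi> = (\<lambda>_. 0)" using cs_nonl2[OF T] by simp
next
  fix e :: real assume e: "e > 0"
  obtain p where p: "finsupp G p"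
    "\<And>\<xi>. \<xi> \<in> l2 G \<Longrightarrow> l2norm G (\<lambda>x. T \<xi> x - lreg G p \<xi> x) \<le> e * l2norm G \<xi>"
    using cs_approx[OF T e] by metis
  let ?q = "\<lambda>y. if y \<in> A then p y else 0"
  have fs: "finite (supp p)" "supp p \<subseteq> carrier G" using finsupp_supp[OF p(1)] by auto
  have Ac: "A \<subseteq> carrier G" using A by (rule subgroup.subset)
  have q1: "finsupp G ?q"
  proof -
    have sb: "{x. ?q x \<noteq> 0} \<subseteq> supp p" by (auto simp: supp_def)
    have a: "finite {x. ?q x \<noteq> 0}" using finite_subset[OF sb fs(1)] .
    have b: "{x. ?q x \<noteq> 0} \<subseteq> carrier G" using Ac by auto
    show ?thesis unfolding finsupp_def using a b by blast
  qed
  have q2: "{x. ?q x \<noteq> 0} \<subseteq> A" by auto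
  have q3: "op_close G T (lreg G ?q) e"
    unfolding op_close_def
  proof
    fix \<xi> assume xi: "\<xi> \<in> l2 G"
    let ?D = "\<lambda>\<eta>. (\<lambda>x. T \<eta> x - lreg G p \<eta> x)"
    have D: "?D \<eta> \<in> l2 G \<and> l2norm G (?D \<eta>) \<le> e * l2norm G \<eta>" if "\<eta> \<in> l2 G" for \<eta>
      using l2_diff(1)[OF cs_l2[OF T that] lreg_l2(1)[OF p(1) that]] p(2)[OF that] by simp
    have C: "(\<lambda>x. if x \<in> carrier G then ?D (Pc (kap A x) \<xi>) x else 0) \<in> l2 G \<and>
         l2norm G (\<lambda>x. if x \<in> carrier G then ?D (Pc (kap A x) \<xi>) x else 0) \<le> e * l2norm G \<xi>"
      by (rule compression[where \<kappa>="kap A"])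
         (use kap_sub kap_disj[OF A] D e xi in auto)
    have eq: "(\<lambda>x. T \<xi> x - lreg G ?q \<xi> x) = (\<lambda>x. if x \<in> carrier G then ?D (Pc (kap A x) \<xi>) x else 0)"
    proof
      fix x
      show "T \<xi> x - lreg G ?q \<xi> x = (if x \<in> carrier G then ?D (Pc (kap A x) \<xi>) x else 0)"
      proof (cases "x \<in> carrier G")
        case True
        then show ?thesis
          using key_pointwise[OF A T f xi True] lreg_restrict[OF A p(1) xi True] by simp
      next
        case False
        then show ?thesis using l2_outside[OF cs_l2[OF T xi] False] xi by (simp add: lreg_def)
      qed
    qed
    show "l2norm G (\<lambda>x. T \<xi> x - lreg G ?q \<xi> x) \<le> e * l2norm G \<xi>" unfolding eq using C by simp
  qed
  show "\<exists>q. finsupp G q \<and> {x. q x \<noteq> 0} \<subseteq> A \<and> op_close G T (lreg G q) e"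
    using q1 q2 q3 by blast
qed

lemma centre_lt:
  assumes T: "T \<in> Cred_centre G" and g: "g \<in> carrier G" and eta: "\<eta> \<in> l2 G"
  shows "T (lt g \<eta>) = lt g (T \<eta>)"
proof -
  have TC: "T \<in> cstar_of G (carrier G)" using T by (simp add: Cred_centre_def Cred_def)
  have "(\<lambda>\<xi>. T (ug G g \<xi>)) = (\<lambda>\<xi>. ug G g (T \<xi>))"
    using T ug_cred[OF g] by (simp add: Cred_centre_def)
  then have "T (ug G g \<eta>) = ug G g (T \<eta>)" by metis
  then show ?thesis using ug_eq[OF g eta] ug_eq[OF g cs_l2[OF TC eta]] by simp
qed

lemma centre_f_conj:
  assumes T: "T \<in> Cred_centre G" and g: "g \<in> carrier G" and x: "x \<in> carrier G"
  shows "T (delta \<one>) (g \<otimes> x \<otimes> inv g) = T (delta \<one>) x"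
proof -
  have TC: "T \<in> cstar_of G (carrier G)" using T by (simp add: Cred_centre_def Cred_def)
  let ?y = "x \<otimes> inv g"
  have y: "?y \<in> carrier G" using x g by simp
  have ig: "inv g \<in> carrier G" using g by simp
  have "T (delta (inv g)) = T (lt (inv g) (delta \<one>))" using lt_delta[OF ig] by simp
  also have "\<dots> = lt (inv g) (T (delta \<one>))" using centre_lt[OF T ig delta_l2] by simp
  finally have "T (delta (inv g)) ?y = T (delta \<one>) (g \<otimes> ?y)" using y g by (simp add: lt_def)
  moreover have "T (delta (inv g)) ?y = T (delta \<one>) (?y \<otimes> g)"
    using T_delta[OF TC ig y] g by simp
  moreover have "?y \<otimes> g = x" using x g by (simp add: m_assoc)
  moreover have "g \<otimes> ?y = g \<otimes> x \<otimes> inv g" using x g by (simp add: m_assoc)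
  ultimately show ?thesis by simp
qed

lemma centre_f_vanish:
  assumes T: "T \<in> Cred_centre G" and z: "z \<notin> FC_centre G"
  shows "T (delta \<one>) z = 0"
proof (cases "z \<in> carrier G")
  case False
  have TC: "T \<in> cstar_of G (carrier G)" using T by (simp add: Cred_centre_def Cred_def)
  show ?thesis using l2_outside[OF cs_l2[OF TC delta_l2] False] by simp
next
  case True
  have TC: "T \<in> cstar_of G (carrier G)" using T by (simp add: Cred_centre_def Cred_def)
  let ?f = "T (delta \<one>)"
  let ?Cl = "{h \<otimes> z \<otimes> inv h | h. h \<in> carrier G}"
  have inf: "infinite ?Cl" using z True by (simp add: FC_centre_def)
  have sub: "?Cl \<subseteq> carrier G" using True by auto
  have fl2: "?f \<in> l2 G" using cs_l2[OF TC delta_l2] by simp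
  have s: "sqf ?f summable_on ?Cl"
    using fl2 sub by (auto simp: l2_iff intro: summable_on_subset_banach)
  have const: "sqf ?f w = (cmod (?f z))\<^sup>2" if "w \<in> ?Cl" for w
    using that centre_f_conj[OF T _ True] by (auto simp: sqf_def)
  have "(\<lambda>_. (cmod (?f z))\<^sup>2) summable_on ?Cl"
    using s const by (metis (no_types, lifting) summable_on_cong)
  then have "(cmod (?f z))\<^sup>2 = 0" using infsum_diverge_constant[OF inf] by blast
  then show ?thesis by simp
qed

lemma analytic_main:
  assumes FC: "subgroup (FC_centre G) G"
  shows "Cred_centre G \<subseteq> cstar_of G (FC_centre G) \<and>
         Cred_centre G = fixed_points G (cstar_of G (FC_centre G))"
proof -
  let ?A = "FC_centre G"
  have sub1: "Cred_centre G \<subseteq> cstar_of G ?A"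
  proof
    fix T assume T: "T \<in> Cred_centre G"
    have TC: "T \<in> cstar_of G (carrier G)" using T by (simp add: Cred_centre_def Cred_def)
    show "T \<in> cstar_of G ?A" using restrict_in_cstar[OF FC TC centre_f_vanish[OF T]] .
  qed
  have sub2: "Cred_centre G \<subseteq> fixed_points G (cstar_of G ?A)"
  proof
    fix T assume T: "T \<in> Cred_centre G"
    have TC: "T \<in> cstar_of G (carrier G)" using T by (simp add: Cred_centre_def Cred_def)
    have "(\<lambda>\<xi>. ug G g (T (ug G (inv g) \<xi>))) = T" if g: "g \<in> carrier G" for g
    proof
      fix \<xi>
      show "ug G g (T (ug G (inv g) \<xi>)) = T \<xi>"
      proof (cases "\<xi> \<in> l2 G")
        case True
        have ig: "inv g \<in> carrier G" using g by simp
        have "T (ug G (inv g) \<xi>) = lt (inv g) (T \<xi>)"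
          using ug_eq[OF ig True] centre_lt[OF T ig True] by simp
        moreover have "lt (inv g) (T \<xi>) \<in> l2 G" using lt_l2(1)[OF ig cs_l2[OF TC True]] .
        ultimately show ?thesis
          using ug_eq[OF g] lt_lt[OF g ig cs_l2[OF TC True]] lt_one[OF cs_l2[OF TC True]] g by simp
      next
        case False
        have "ug G (inv g) \<xi> = (\<lambda>_. 0)" using ug_nonl2[OF False] .
        moreover have "T (\<lambda>_. 0) = (\<lambda>_. 0)" using cs_zero[OF TC] .
        moreover have "ug G g (\<lambda>_. 0) = (\<lambda>_. 0)" using ug_eq[OF g l2_zero(1)] by (simp add: lt_def)
        ultimately show ?thesis using cs_nonl2[OF TC False] by simp
      qed
    qed
    then show "T \<in> fixed_points G (cstar_of G ?A)"
      using sub1 T by (auto simp: fixed_points_def)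
  qed
  have sub3: "fixed_points G (cstar_of G ?A) \<subseteq> Cred_centre G"
  proof
    fix T assume T: "T \<in> fixed_points G (cstar_of G ?A)"
    have TA: "T \<in> cstar_of G ?A" using T by (simp add: fixed_points_def)
    have Ac: "?A \<subseteq> carrier G" by (auto simp: FC_centre_def)
    have TC: "T \<in> Cred G" using cs_mono[OF Ac] TA by (auto simp: Cred_def)
    have fx: "\<And>g. g \<in> carrier G \<Longrightarrow> (\<lambda>\<xi>. ug G g (T (ug G (inv g) \<xi>))) = T"
      using T by (simp add: fixed_points_def)
    have hyp: "\<And>g \<eta>. g \<in> carrier G \<Longrightarrow> \<eta> \<in> l2 G \<Longrightarrow> T (lt g \<eta>) = lt g (T \<eta>)"
      using fixed_lt[OF TA _ fx] by blast
    have "(\<lambda>\<xi>. T (S \<xi>)) = (\<lambda>\<xi>. S (T \<xi>))" if "S \<in> Cred G" for S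
      using comm_cred[OF TA hyp that] by simp
    then show "T \<in> Cred_centre G" using TC by (simp add: Cred_centre_def)
  qed
  show ?thesis using sub1 sub2 sub3 by blast
qed

end



context group
begin

lemma cancel1: "x \<in> carrier G \<Longrightarrow> y \<in> carrier G \<Longrightarrow> x \<otimes> (inv x \<otimes> y) = y"
  by (simp add: m_assoc[symmetric])

lemma cancel2: "x \<in> carrier G \<Longrightarrow> y \<in> carrier G \<Longrightarrow> inv x \<otimes> (x \<otimes> y) = y"
  by (simp add: m_assoc[symmetric])

lemma comm_inv:
  assumes z: "z \<in> carrier G" and a: "a \<in> carrier G" and c: "z \<otimes> a = a \<otimes> z"
  shows "inv z \<otimes> a = a \<otimes> inv z"
proof -
  have "inv z \<otimes> (z \<otimes> a) \<otimes> inv z = inv z \<otimes> (a \<otimes> z) \<otimes> inv z" using c by simp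
  moreover have "inv z \<otimes> (z \<otimes> a) \<otimes> inv z = a \<otimes> inv z"
    using z a by (simp add: m_assoc[symmetric])
  moreover have "inv z \<otimes> (a \<otimes> z) \<otimes> inv z = inv z \<otimes> a"
    using z a by (simp add: m_assoc)
  ultimately show ?thesis by simp
qed

lemma conj_eq_iff:
  assumes u: "u \<in> carrier G" and v: "v \<in> carrier G" and c: "c \<in> carrier G"
  shows "inv u \<otimes> c \<otimes> u = inv v \<otimes> c \<otimes> v \<longleftrightarrow> (v \<otimes> inv u) \<otimes> c = c \<otimes> (v \<otimes> inv u)"
proof -
  have e1: "v \<otimes> (inv u \<otimes> c \<otimes> u) \<otimes> inv u = (v \<otimes> inv u) \<otimes> c"
    using u v c by (simp add: m_assoc)
  have e2: "v \<otimes> (inv v \<otimes> c \<otimes> v) \<otimes> inv u = c \<otimes> (v \<otimes> inv u)"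
    using u v c by (simp add: m_assoc cancel1)
  have "inv u \<otimes> c \<otimes> u = inv v \<otimes> c \<otimes> v \<longleftrightarrow>
        v \<otimes> (inv u \<otimes> c \<otimes> u) \<otimes> inv u = v \<otimes> (inv v \<otimes> c \<otimes> v) \<otimes> inv u"
  proof
    assume "inv u \<otimes> c \<otimes> u = inv v \<otimes> c \<otimes> v"
    then show "v \<otimes> (inv u \<otimes> c \<otimes> u) \<otimes> inv u = v \<otimes> (inv v \<otimes> c \<otimes> v) \<otimes> inv u" by simp
  next
    assume h: "v \<otimes> (inv u \<otimes> c \<otimes> u) \<otimes> inv u = v \<otimes> (inv v \<otimes> c \<otimes> v) \<otimes> inv u"
    have "v \<otimes> (inv u \<otimes> c \<otimes> u) = v \<otimes> (inv v \<otimes> c \<otimes> v)"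
      using r_cancel[of "inv u" "v \<otimes> (inv u \<otimes> c \<otimes> u)" "v \<otimes> (inv v \<otimes> c \<otimes> v)"] h u v c by simp
    then show "inv u \<otimes> c \<otimes> u = inv v \<otimes> c \<otimes> v"
      using l_cancel[of v "inv u \<otimes> c \<otimes> u" "inv v \<otimes> c \<otimes> v"] u v c by simp
  qed
  then show ?thesis using e1 e2 by simp
qed

definition cl :: "'a \<Rightarrow> 'a set" where
  "cl x = {h \<otimes> x \<otimes> inv h | h. h \<in> carrier G}"

lemma FC_iff: "x \<in> FC_centre G \<longleftrightarrow> x \<in> carrier G \<and> finite (cl x)"
  by (simp add: FC_centre_def cl_def)

lemma FC_subgroup: "subgroup (FC_centre G) G"
proof (rule subgroupI)
  show "FC_centre G \<subseteq> carrier G" by (auto simp: FC_iff)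
next
  have "cl \<one> = {\<one>}"
    apply (auto simp: cl_def)
    apply (rule exI[of _ "\<one>"])
    apply simp
    done
  then have "\<one> \<in> FC_centre G" by (simp add: FC_iff)
  then show "FC_centre G \<noteq> {}" by blast
next
  fix x assume x: "x \<in> FC_centre G"
  have "cl (inv x) \<subseteq> (\<lambda>w. inv w) ` cl x"
  proof
    fix w assume "w \<in> cl (inv x)"
    then obtain h where h: "h \<in> carrier G" "w = h \<otimes> inv x \<otimes> inv h" by (auto simp: cl_def)
    have "w = inv (h \<otimes> x \<otimes> inv h)" using h x by (simp add: FC_iff inv_mult_group m_assoc)
    then show "w \<in> (\<lambda>w. inv w) ` cl x" using h by (auto simp: cl_def)
  qed
  then show "inv x \<in> FC_centre G" using x by (auto simp: FC_iff intro: finite_subset)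
next
  fix x y assume x: "x \<in> FC_centre G" and y: "y \<in> FC_centre G"
  have "cl (x \<otimes> y) \<subseteq> (\<lambda>(u, v). u \<otimes> v) ` (cl x \<times> cl y)"
  proof
    fix w assume "w \<in> cl (x \<otimes> y)"
    then obtain h where h: "h \<in> carrier G" "w = h \<otimes> (x \<otimes> y) \<otimes> inv h" by (auto simp: cl_def)
    have "w = (h \<otimes> x \<otimes> inv h) \<otimes> (h \<otimes> y \<otimes> inv h)" using h x y by (simp add: FC_iff m_assoc cancel2)
    moreover have "(h \<otimes> x \<otimes> inv h, h \<otimes> y \<otimes> inv h) \<in> cl x \<times> cl y" using h by (auto simp: cl_def)
    ultimately show "w \<in> (\<lambda>(u, v). u \<otimes> v) ` (cl x \<times> cl y)" by (auto intro: image_eqI)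
  qed
  then show "x \<otimes> y \<in> FC_centre G" using x y by (auto simp: FC_iff intro: finite_subset)
qed

lemma FC_normal: "FC_centre G \<lhd> G"
  unfolding normal_inv_iff
proof (intro conjI ballI)
  show "subgroup (FC_centre G) G" by (rule FC_subgroup)
next
  fix g h assume g: "g \<in> carrier G" and h: "h \<in> FC_centre G"
  have hc: "h \<in> carrier G" using h by (simp add: FC_iff)
  have "cl (g \<otimes> h \<otimes> inv g) \<subseteq> cl h"
  proof
    fix w assume "w \<in> cl (g \<otimes> h \<otimes> inv g)"
    then obtain k where k: "k \<in> carrier G" "w = k \<otimes> (g \<otimes> h \<otimes> inv g) \<otimes> inv k" by (auto simp: cl_def)
    have "w = (k \<otimes> g) \<otimes> h \<otimes> inv (k \<otimes> g)" using k g hc by (simp add: inv_mult_group m_assoc)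
    then show "w \<in> cl h" using k g by (auto simp: cl_def)
  qed
  then show "g \<otimes> h \<otimes> inv g \<in> FC_centre G" using h g hc by (auto simp: FC_iff intro: finite_subset)
qed

end



lemma (in comm_group) comm4':
  assumes u: "u \<in> carrier G" and v: "v \<in> carrier G"
  shows "u \<otimes> v \<otimes> inv u \<otimes> inv v = \<one>"
proof -
  have "u \<otimes> v \<otimes> inv u \<otimes> inv v = (u \<otimes> v) \<otimes> (inv u \<otimes> inv v)" using u v by (simp add: m_assoc)
  also have "inv u \<otimes> inv v = inv (u \<otimes> v)" using u v by (simp add: inv_mult)
  also have "(u \<otimes> v) \<otimes> inv (u \<otimes> v) = \<one>" using u v by simp
  finally show ?thesis .
qed

lemma comm4:
  fixes Z (structure)
  assumes "comm_group Z" "u \<in> carrier Z" "v \<in> carrier Z"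
  shows "u \<otimes> v \<otimes> inv u \<otimes> inv v = \<one>"
  using comm_group.comm4'[OF assms] .

locale fc_pair = group +
  fixes a b
  assumes aFC: "a \<in> FC_centre G" and bFC: "b \<in> FC_centre G"
begin

definition HH where "HH = generate G {a, b}"
definition ZZ where "ZZ = {z \<in> HH. z \<otimes> a = a \<otimes> z \<and> z \<otimes> b = b \<otimes> z}"
definition pr where "pr x = (inv x \<otimes> a \<otimes> x, inv x \<otimes> b \<otimes> x)"
definition RR where "RR \<pi> = (SOME y. y \<in> HH \<and> pr y = \<pi>)"
definition rr where "rr x = RR (pr x)"
definition Tr where "Tr = rr ` HH"
definition zz where "zz t g = t \<otimes> g \<otimes> inv (rr (t \<otimes> g))"
definition Zg where "Zg = G\<lparr>carrier := ZZ\<rparr>"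
definition VV where "VV g = finprod Zg (\<lambda>t. zz t g) Tr"

lemma ac: "a \<in> carrier G" "b \<in> carrier G" using aFC bFC by (auto simp: FC_iff)

lemma HH_sub: "subgroup HH G"
  unfolding HH_def using ac by (intro generate_is_subgroup) auto

lemma HH_c: "x \<in> HH \<Longrightarrow> x \<in> carrier G"
  using subgroup.subset[OF HH_sub] by auto

lemma ab_HH: "a \<in> HH" "b \<in> HH" by (auto simp: HH_def intro: generate.incl)

lemma HH_m: "x \<in> HH \<Longrightarrow> y \<in> HH \<Longrightarrow> x \<otimes> y \<in> HH" using subgroup.m_closed[OF HH_sub] .
lemma HH_i: "x \<in> HH \<Longrightarrow> inv x \<in> HH" using subgroup.m_inv_closed[OF HH_sub] .
lemma HH_1: "\<one> \<in> HH" using subgroup.one_closed[OF HH_sub] .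

lemma HH_pow: "x \<in> HH \<Longrightarrow> x [^] (k::nat) \<in> HH"
  by (induction k) (simp_all add: HH_1 HH_m)

lemma ZZ_central:
  assumes z: "z \<in> ZZ" and h: "h \<in> HH"
  shows "z \<otimes> h = h \<otimes> z"
proof -
  have zc: "z \<in> carrier G" and za: "z \<otimes> a = a \<otimes> z" and zb: "z \<otimes> b = b \<otimes> z"
    using z by (auto simp: ZZ_def HH_c)
  have "h \<in> generate G {a, b}" using h by (simp add: HH_def)
  then show ?thesis
  proof (induction h rule: generate.induct)
    case one then show ?case using zc by simp
  next
    case (incl h) then show ?case using za zb by auto
  next
    case (inv h) then show ?case using comm_inv[OF zc] za zb ac
      by (metis comm_inv empty_iff insert_iff inv_closed zc)
  next
    case (eng h1 h2)
    have c: "h1 \<in> carrier G" "h2 \<in> carrier G"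
      using eng.hyps HH_c by (auto simp: HH_def)
    have "z \<otimes> (h1 \<otimes> h2) = (z \<otimes> h1) \<otimes> h2" using zc c by (simp add: m_assoc)
    also have "\<dots> = h1 \<otimes> (z \<otimes> h2)" using eng.IH zc c by (simp add: m_assoc)
    also have "\<dots> = (h1 \<otimes> h2) \<otimes> z" using eng.IH zc c by (simp add: m_assoc)
    finally show ?case .
  qed
qed

lemma ZZ_sub: "subgroup ZZ G"
proof (rule subgroupI)
  show "ZZ \<subseteq> carrier G" by (auto simp: ZZ_def HH_c)
  have "\<one> \<in> ZZ" using HH_1 ac by (simp add: ZZ_def)
  then show "ZZ \<noteq> {}" by blast
next
  fix z assume z: "z \<in> ZZ"
  have zc: "z \<in> carrier G" using z by (auto simp: ZZ_def HH_c)
  show "inv z \<in> ZZ" using z zc comm_inv[OF zc] ac HH_i by (auto simp: ZZ_def)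
next
  fix z w assume z: "z \<in> ZZ" and w: "w \<in> ZZ"
  have c: "z \<in> carrier G" "w \<in> carrier G" using z w by (auto simp: ZZ_def HH_c)
  have "z \<otimes> w \<otimes> a = a \<otimes> (z \<otimes> w)"
    using z w c ac by (simp add: ZZ_def m_assoc) (metis m_assoc)
  moreover have "z \<otimes> w \<otimes> b = b \<otimes> (z \<otimes> w)"
    using z w c ac by (simp add: ZZ_def m_assoc) (metis m_assoc)
  ultimately show "z \<otimes> w \<in> ZZ" using z w HH_m by (auto simp: ZZ_def)
qed

lemma ZZ_HH: "z \<in> ZZ \<Longrightarrow> z \<in> HH" by (simp add: ZZ_def)

lemma Zg_comm: "comm_group Zg"
proof -
  have g: "group Zg" unfolding Zg_def using subgroup.subgroup_is_group[OF ZZ_sub is_group] .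
  show ?thesis
  proof (rule group.group_comm_groupI[OF g])
    fix x y assume "x \<in> carrier Zg" "y \<in> carrier Zg"
    then show "x \<otimes>\<^bsub>Zg\<^esub> y = y \<otimes>\<^bsub>Zg\<^esub> x" using ZZ_central ZZ_HH by (simp add: Zg_def)
  qed
qed

lemma pr_eq:
  assumes "x \<in> HH" "y \<in> HH"
  shows "pr x = pr y \<longleftrightarrow> y \<otimes> inv x \<in> ZZ"
proof -
  have c: "x \<in> carrier G" "y \<in> carrier G" using assms HH_c by auto
  have "pr x = pr y \<longleftrightarrow> (y \<otimes> inv x) \<otimes> a = a \<otimes> (y \<otimes> inv x) \<and> (y \<otimes> inv x) \<otimes> b = b \<otimes> (y \<otimes> inv x)"
    using conj_eq_iff[OF c ac(1)] conj_eq_iff[OF c ac(2)] by (simp add: pr_def)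
  then show ?thesis using assms HH_m HH_i by (auto simp: ZZ_def)
qed

lemma pr_fin: "finite (pr ` HH)"
proof -
  have f: "finite {inv h \<otimes> c \<otimes> h | h. h \<in> carrier G}" if "c \<in> FC_centre G" for c
  proof -
    have "{inv h \<otimes> c \<otimes> h | h. h \<in> carrier G} \<subseteq> cl c"
    proof
      fix w assume "w \<in> {inv h \<otimes> c \<otimes> h | h. h \<in> carrier G}"
      then obtain h where h: "h \<in> carrier G" "w = inv h \<otimes> c \<otimes> h" by auto
      then have "w = inv h \<otimes> c \<otimes> inv (inv h)" by simp
      then show "w \<in> cl c" unfolding cl_def using h by (intro CollectI exI[of _ "inv h"]) simp
    qed
    then show ?thesis using that by (auto simp: FC_iff intro: finite_subset)
  qed
  have "pr ` HH \<subseteq> {inv h \<otimes> a \<otimes> h | h. h \<in> carrier G} \<times> {inv h \<otimes> b \<otimes> h | h. h \<in> carrier G}"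
    using HH_c by (auto simp: pr_def)
  then show ?thesis using finite_cartesian_product[OF f[OF aFC] f[OF bFC]] by (rule finite_subset)
qed

lemma rr_props:
  assumes "x \<in> HH"
  shows "rr x \<in> HH" "pr (rr x) = pr x"
proof -
  have "\<exists>y. y \<in> HH \<and> pr y = pr x" using assms by blast
  then have "rr x \<in> HH \<and> pr (rr x) = pr x" unfolding rr_def RR_def by (rule someI_ex)
  then show "rr x \<in> HH" "pr (rr x) = pr x" by auto
qed

lemma rr_cong: "pr x = pr y \<Longrightarrow> rr x = rr y" by (simp add: rr_def)

lemma Tr_fin: "finite Tr"
proof -
  have "rr = RR \<circ> pr" by (rule ext) (simp add: rr_def)
  then have "Tr = RR ` (pr ` HH)" by (simp add: Tr_def image_comp)
  then show ?thesis using pr_fin by simp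
qed

lemma Tr_HH: "t \<in> Tr \<Longrightarrow> t \<in> HH" unfolding Tr_def using rr_props(1) by blast

lemma Tr_fix: "t \<in> Tr \<Longrightarrow> rr t = t"
proof -
  assume "t \<in> Tr" then obtain x where x: "x \<in> HH" "t = rr x" by (auto simp: Tr_def)
  then show "rr t = t" using rr_cong[OF rr_props(2)[OF x(1)]] by simp
qed

lemma Tr_ne: "Tr \<noteq> {}" using HH_1 by (auto simp: Tr_def)

lemma pr_right:
  assumes "x \<in> HH" "y \<in> HH" "h \<in> HH" "pr x = pr y"
  shows "pr (x \<otimes> h) = pr (y \<otimes> h)"
proof -
  have c: "x \<in> carrier G" "y \<in> carrier G" "h \<in> carrier G" using assms HH_c by auto
  have "y \<otimes> h \<otimes> inv (x \<otimes> h) = y \<otimes> inv x"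
    using c by (simp add: inv_mult_group m_assoc cancel1)
  then show ?thesis using assms pr_eq HH_m by auto
qed

lemma zz_in: "t \<in> HH \<Longrightarrow> g \<in> HH \<Longrightarrow> zz t g \<in> ZZ"
proof -
  assume t: "t \<in> HH" and g: "g \<in> HH"
  have tg: "t \<otimes> g \<in> HH" using t g HH_m by simp
  have "pr (t \<otimes> g) = pr (rr (t \<otimes> g))" using rr_props(2)[OF tg] by simp
  then have "t \<otimes> g \<otimes> inv (rr (t \<otimes> g)) \<in> ZZ" using pr_eq[OF rr_props(1)[OF tg] tg] by simp
  then show ?thesis by (simp add: zz_def)
qed

lemma zz_mult:
  assumes t: "t \<in> HH" and g: "g \<in> HH" and h: "h \<in> HH"
  shows "zz t (g \<otimes> h) = zz t g \<otimes> zz (rr (t \<otimes> g)) h"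
proof -
  have tg: "t \<otimes> g \<in> HH" using t g HH_m by simp
  have r: "rr (t \<otimes> g) \<in> HH" using rr_props(1)[OF tg] .
  have "pr (rr (t \<otimes> g) \<otimes> h) = pr (t \<otimes> g \<otimes> h)"
    using pr_right[OF r tg h rr_props(2)[OF tg]] .
  moreover have "t \<otimes> g \<otimes> h = t \<otimes> (g \<otimes> h)" using t g h HH_c by (simp add: m_assoc)
  ultimately have "pr (rr (t \<otimes> g) \<otimes> h) = pr (t \<otimes> (g \<otimes> h))" by simp
  then have e: "rr (rr (t \<otimes> g) \<otimes> h) = rr (t \<otimes> (g \<otimes> h))" by (rule rr_cong)
  have c: "t \<in> carrier G" "g \<in> carrier G" "h \<in> carrier G" "rr (t \<otimes> g) \<in> carrier G"
    using t g h r HH_c by auto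
  have c2: "rr (t \<otimes> (g \<otimes> h)) \<in> carrier G" using rr_props(1)[OF HH_m[OF t HH_m[OF g h]]] HH_c by auto
  show ?thesis unfolding zz_def e using c c2 by (simp add: m_assoc cancel2)
qed

lemma sigma_bij:
  assumes g: "g \<in> HH"
  shows "(\<lambda>t. rr (t \<otimes> g)) ` Tr = Tr" "inj_on (\<lambda>t. rr (t \<otimes> g)) Tr"
proof -
  show inj: "inj_on (\<lambda>t. rr (t \<otimes> g)) Tr"
  proof
    fix t t' assume t: "t \<in> Tr" and t': "t' \<in> Tr" and e: "rr (t \<otimes> g) = rr (t' \<otimes> g)"
    have th: "t \<in> HH" "t' \<in> HH" using t t' Tr_HH by auto
    have h1: "t \<otimes> g \<in> HH" "t' \<otimes> g \<in> HH" using th g HH_m by auto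
    have "pr (t \<otimes> g) = pr (rr (t \<otimes> g))" using rr_props(2)[OF h1(1)] by simp
    also have "\<dots> = pr (rr (t' \<otimes> g))" using e by simp
    also have "\<dots> = pr (t' \<otimes> g)" using rr_props(2)[OF h1(2)] by simp
    finally have "pr (t \<otimes> g \<otimes> inv g) = pr (t' \<otimes> g \<otimes> inv g)"
      by (rule pr_right[OF h1 HH_i[OF g]])
    moreover have "t \<otimes> g \<otimes> inv g = t" "t' \<otimes> g \<otimes> inv g = t'" using th g HH_c by (simp_all add: m_assoc)
    ultimately have "pr t = pr t'" by simp
    then have "rr t = rr t'" by (rule rr_cong)
    then show "t = t'" using Tr_fix[OF t] Tr_fix[OF t'] by simp
  qed
  have sub: "(\<lambda>t. rr (t \<otimes> g)) ` Tr \<subseteq> Tr" using Tr_HH HH_m g by (auto simp: Tr_def)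
  show "(\<lambda>t. rr (t \<otimes> g)) ` Tr = Tr" using endo_inj_surj[OF Tr_fin sub inj] .
qed

lemma Zg_simps[simp]: "carrier Zg = ZZ" "mult Zg = mult G" "one Zg = \<one>"
  by (simp_all add: Zg_def)

lemma VV_mult:
  assumes g: "g \<in> HH" and h: "h \<in> HH"
  shows "VV (g \<otimes> h) = VV g \<otimes> VV h"
proof -
  interpret Z: comm_group Zg by (rule Zg_comm)
  have P1: "(\<lambda>t. zz t g) \<in> Tr \<rightarrow> carrier Zg" using zz_in Tr_HH g by auto
  have P2: "(\<lambda>t. zz (rr (t \<otimes> g)) h) \<in> Tr \<rightarrow> carrier Zg"
    using zz_in Tr_HH g h rr_props(1) HH_m by auto
  have "VV (g \<otimes> h) = finprod Zg (\<lambda>t. zz t g \<otimes>\<^bsub>Zg\<^esub> zz (rr (t \<otimes> g)) h) Tr"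
  proof -
    have P3: "(\<lambda>t. zz t g \<otimes>\<^bsub>Zg\<^esub> zz (rr (t \<otimes> g)) h) \<in> Tr \<rightarrow> carrier Zg"
      using P1 P2 subgroup.m_closed[OF ZZ_sub] by (auto simp: Pi_def)
    show ?thesis unfolding VV_def
      by (rule Z.finprod_cong'[OF refl P3]) (simp add: zz_mult Tr_HH g h)
  qed
  also have "\<dots> = VV g \<otimes>\<^bsub>Zg\<^esub> finprod Zg (\<lambda>t. zz (rr (t \<otimes> g)) h) Tr"
    unfolding VV_def using P1 P2 by (rule Z.finprod_multf)
  also have "finprod Zg (\<lambda>t. zz (rr (t \<otimes> g)) h) Tr = finprod Zg (\<lambda>s. zz s h) ((\<lambda>t. rr (t \<otimes> g)) ` Tr)"
    using Z.finprod_reindex[of "\<lambda>s. zz s h" "\<lambda>t. rr (t \<otimes> g)" Tr] sigma_bij[OF g] zz_in Tr_HH h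
    by auto
  also have "\<dots> = VV h" unfolding VV_def sigma_bij(1)[OF g] ..
  finally show ?thesis by simp
qed

lemma VV_in: "g \<in> HH \<Longrightarrow> VV g \<in> ZZ"
proof -
  assume g: "g \<in> HH"
  interpret Z: comm_group Zg by (rule Zg_comm)
  have "(\<lambda>t. zz t g) \<in> Tr \<rightarrow> carrier Zg" using zz_in Tr_HH g by auto
  then show "VV g \<in> ZZ" unfolding VV_def using Z.finprod_closed by simp
qed

lemma VV_Z:
  assumes z: "z \<in> ZZ"
  shows "VV z = z [^] card Tr"
proof -
  interpret Z: comm_group Zg by (rule Zg_comm)
  have zh: "z \<in> HH" using z ZZ_HH by simp
  have "zz t z = z" if t: "t \<in> Tr" for t
  proof -
    have th: "t \<in> HH" using Tr_HH t by simp
    have c: "t \<in> carrier G" "z \<in> carrier G" using th zh HH_c by auto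
    have "t \<otimes> z \<otimes> inv t = z \<otimes> t \<otimes> inv t" using ZZ_central[OF z th] by simp
    also have "\<dots> = z" using c by (simp add: m_assoc)
    finally have tz: "t \<otimes> z \<otimes> inv t = z" .
    then have "t \<otimes> z \<otimes> inv t \<in> ZZ" using z by simp
    then have "pr t = pr (t \<otimes> z)" using pr_eq[OF th HH_m[OF th zh]] by simp
    then have "rr (t \<otimes> z) = t" using rr_cong Tr_fix[OF t] by metis
    then show ?thesis using tz by (simp add: zz_def)
  qed
  then have "VV z = finprod Zg (\<lambda>t. z) Tr" unfolding VV_def using z by (intro Z.finprod_cong') auto
  also have "\<dots> = z [^]\<^bsub>Zg\<^esub> card Tr" using z by (intro Z.finprod_const) simp
  also have "\<dots> = z [^] card Tr" by (simp add: Zg_def nat_pow_consistent[symmetric])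
  finally show ?thesis .
qed

lemma VV_pow: "g \<in> HH \<Longrightarrow> VV (g [^] (k::nat)) = VV g [^] k"
proof (induction k)
  case 0
  have "VV \<one> = \<one> [^] card Tr" using VV_Z[of \<one>] subgroup.one_closed[OF ZZ_sub] by simp
  then show ?case by simp
next
  case (Suc k)
  have gk: "g [^] k \<in> HH" using Suc.prems HH_pow by simp
  have "VV (g [^] Suc k) = VV (g [^] k \<otimes> g)" by simp
  also have "\<dots> = VV (g [^] k) \<otimes> VV g" using VV_mult[OF gk Suc.prems] .
  finally show ?case using Suc by simp
qed

lemma VV_inv:
  assumes x: "x \<in> HH"
  shows "VV (inv x) = inv\<^bsub>Zg\<^esub> VV x"
proof -
  interpret Z: comm_group Zg by (rule Zg_comm)
  have c1: "VV x \<in> carrier Zg" "VV (inv x) \<in> carrier Zg" using VV_in x HH_i by auto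
  have "VV x \<otimes> VV (inv x) = VV (x \<otimes> inv x)" using VV_mult[OF x HH_i[OF x]] by simp
  also have "x \<otimes> inv x = \<one>" using x HH_c by simp
  also have "VV \<one> = \<one>" using VV_Z[of \<one>] subgroup.one_closed[OF ZZ_sub] by simp
  finally have "VV x \<otimes>\<^bsub>Zg\<^esub> VV (inv x) = \<one>\<^bsub>Zg\<^esub>" by simp
  then have "VV (inv x) \<otimes>\<^bsub>Zg\<^esub> VV x = \<one>\<^bsub>Zg\<^esub>" using Z.m_comm[OF c1] by simp
  then show ?thesis using Z.inv_equality[OF _ c1] by simp
qed

lemma VV_comm1: "VV (a \<otimes> b \<otimes> inv a \<otimes> inv b) = \<one>"
proof -
  interpret Z: comm_group Zg by (rule Zg_comm)
  have c: "VV a \<in> carrier Zg" "VV b \<in> carrier Zg" using VV_in ab_HH by auto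
  have "VV (a \<otimes> b \<otimes> inv a \<otimes> inv b) = VV a \<otimes> VV b \<otimes> VV (inv a) \<otimes> VV (inv b)"
    using VV_mult ab_HH HH_m HH_i by simp
  also have "\<dots> = VV a \<otimes>\<^bsub>Zg\<^esub> VV b \<otimes>\<^bsub>Zg\<^esub> inv\<^bsub>Zg\<^esub> VV a \<otimes>\<^bsub>Zg\<^esub> inv\<^bsub>Zg\<^esub> VV b"
    using VV_inv ab_HH by simp
  also have "\<dots> = \<one>\<^bsub>Zg\<^esub>" using c by (rule comm4[OF Zg_comm])
  finally show ?thesis by simp
qed

lemma noninj:
  fixes c assumes cH: "c \<in> HH"
  shows "\<not> inj_on (\<lambda>i::nat. pr (c [^] i)) {0..card (pr ` HH)}"
proof
  let ?N = "card (pr ` HH)"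
  assume inj: "inj_on (\<lambda>i::nat. pr (c [^] i)) {0..?N}"
  have "(\<lambda>i::nat. pr (c [^] i)) ` {0..?N} \<subseteq> pr ` HH"
    using cH HH_pow by auto
  then have "card ((\<lambda>i::nat. pr (c [^] i)) ` {0..?N}) \<le> ?N" using pr_fin by (intro card_mono) auto
  then show False using card_image[OF inj] by simp
qed

lemma gen_pow:
  fixes c and l m :: nat assumes cH: "c \<in> HH" and lm: "l < m" "pr (c [^] l) = pr (c [^] m)"
  shows "c [^] (m - l) \<in> ZZ"
proof -
    have cc: "c \<in> carrier G" using cH HH_c by simp
    have hl: "c [^] l \<in> HH" "c [^] m \<in> HH" using cH HH_pow by auto
    have z: "c [^] m \<otimes> inv (c [^] l) \<in> ZZ" using pr_eq[OF hl] lm(2) by simp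
    have e1: "c [^] (m - l) \<otimes> c [^] l = c [^] m" using nat_pow_mult[OF cc, of "m - l" l] lm(1) by simp
    have "c [^] (m - l) = c [^] (m - l) \<otimes> c [^] l \<otimes> inv (c [^] l)"
      using cc by (simp add: m_assoc del: nat_pow_mult)
    also have "\<dots> = c [^] m \<otimes> inv (c [^] l)" by (simp only: e1)
    finally show ?thesis using z by simp
qed

lemma pow_in_ZZ:
  fixes c assumes cH: "c \<in> HH"
  shows "\<exists>k::nat. k > 0 \<and> c [^] k \<in> ZZ"
proof -
  obtain i j :: nat where ij: "i \<noteq> j" "pr (c [^] i) = pr (c [^] j)"
    using noninj[OF cH] unfolding inj_on_def by blast
  show ?thesis
  proof (cases "i < j")
    case True
    have "c [^] (j - i) \<in> ZZ" using gen_pow[OF cH True ij(2)] .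
    moreover have "j - i > 0" using True by simp
    ultimately show ?thesis by blast
  next
    case False then have ji: "j < i" using ij(1) by simp
    have "c [^] (i - j) \<in> ZZ" using gen_pow[OF cH ji] ij(2) by simp
    moreover have "i - j > 0" using ji by simp
    ultimately show ?thesis by blast
  qed
qed

lemma ab_comm:
  assumes tf: "torsion_free G"
  shows "a \<otimes> b = b \<otimes> a"
proof -
  let ?c = "a \<otimes> b \<otimes> inv a \<otimes> inv b"
  have cH: "?c \<in> HH" using ab_HH HH_m HH_i by simp
  have cc: "?c \<in> carrier G" using ac by simp
  obtain k :: nat where k: "k > 0" "?c [^] k \<in> ZZ" using pow_in_ZZ[OF cH] by blast
  have "VV (?c [^] k) = \<one>" using VV_pow[OF cH, of k] VV_comm1 by simp
  moreover have "VV (?c [^] k) = (?c [^] k) [^] card Tr" using VV_Z[OF k(2)] .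
  ultimately have "?c [^] (k * card Tr) = \<one>" using cc by (simp add: nat_pow_pow)
  moreover have "k * card Tr > 0" using k(1) Tr_fin Tr_ne by (simp add: card_gt_0_iff)
  ultimately have c1: "?c = \<one>" using tf cc unfolding torsion_free_def by blast
  have "a \<otimes> b = ?c \<otimes> (b \<otimes> a)" using ac by (simp add: m_assoc cancel2)
  then show ?thesis using c1 ac by simp
qed

end


theorem proposition2p6:
  fixes G :: "('a, 'b) monoid_scheme"
  assumes "group G" and "torsion_free G"
  shows "FC_centre G \<lhd> G
    \<and> (\<forall>a\<in>FC_centre G. \<forall>b\<in>FC_centre G. a \<otimes>\<^bsub>G\<^esub> b = b \<otimes>\<^bsub>G\<^esub> a)
    \<and> Cred_centre G \<subseteq> cstar_of G (FC_centre G)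
    \<and> Cred_centre G = fixed_points G (cstar_of G (FC_centre G))"
proof -
  have n: "FC_centre G \<lhd> G" using group.FC_normal[OF assms(1)] .
  have ab: "\<forall>a\<in>FC_centre G. \<forall>b\<in>FC_centre G. a \<otimes>\<^bsub>G\<^esub> b = b \<otimes>\<^bsub>G\<^esub> a"
  proof (intro ballI)
    fix a b assume a: "a \<in> FC_centre G" and b: "b \<in> FC_centre G"
    have "fc_pair G a b" by (intro fc_pair.intro fc_pair_axioms.intro assms(1) a b)
    then show "a \<otimes>\<^bsub>G\<^esub> b = b \<otimes>\<^bsub>G\<^esub> a" by (rule fc_pair.ab_comm[OF _ assms(2)])
  qed
  have an: "Cred_centre G \<subseteq> cstar_of G (FC_centre G) \<and>
         Cred_centre G = fixed_points G (cstar_of G (FC_centre G))"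
    using group.analytic_main[OF assms(1) group.FC_subgroup[OF assms(1)]] .
  show ?thesis using n ab an by blast
qed

end
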